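(* Let $\mathcal{H}_A$ be a Hilbert space of finite dimension $d_A$, $\rho_A$ a quantum state on $\mathcal{H}_A$, and $\gamma>0$. Then for every positive integer $n$, $$\overline{S}_{\overline{\epsilon}}(A^n)_{\rho^{\otimes n}}\le n\big(S(\rho_A)+\gamma\big),\qquad \underline{S}_{\underline{\epsilon}}(A^n)_{\rho^{\otimes n}}\ge n\big(S(\rho_A)-\gamma\big),$$ where $\overline{\epsilon}=(1+n)^{d_A}2^{-n\overline{D}(\rho_A,\gamma)}$ and $\underline{\epsilon}=(1+n)^{d_A}2^{-n\underline{D}(\rho_A,\gamma)}$, with $$\overline{D}(\rho,\gamma)=\inf_{\sigma:\ \rho\sigma=\sigma\rho,\ S(\sigma)+D(\sigma\|\rho)>S(\rho)+\gamma}D(\sigma\|\rho),\qquad \underline{D}(\rho,\gamma)=\inf_{\sigma:\ \rho\sigma=\sigma\rho,\ S(\sigma)+D(\sigma\|\rho)<S(\rho)-\gamma}D(\sigma\|\rho),$$ the infima being over normalized states $\sigma$ on $\mathcal{H}_A$.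
   Context: $S(\rho)=-\mathrm{Tr}\rho\log_2\rho$ is the von Neumann entropy and $D(\sigma\|\rho)=\mathrm{Tr}[\sigma(\log_2\sigma-\log_2\rho)]$ the relative entropy. For a Hermitian $Y=\sum_i\lambda_iE_i$, $\{Y\ge0\}=\sum_{i:\lambda_i\ge0}E_i$, and $\{\rho\ge c\}$ means $\{\rho-c\mathbb{I}\ge0\}$ (similarly for $\le$). For a state $\rho$ of a system $A$ and $\epsilon\ge0$, the information spectrum sup- and inf-entropies are $$\overline{S}_\epsilon(A)_\rho=\inf\{\lambda:\mathrm{Tr}[\{\rho\ge2^{-\lambda}\}\rho]\ge1-\epsilon\},\qquad \underline{S}_\epsilon(A)_\rho=\sup\{\lambda:\mathrm{Tr}[\{\rho\le2^{-\lambda}\}\rho]\ge1-\epsilon\}.$$ Here $A^n$ denotes $n$ copies of $A$ in the state $\rho_A^{\otimes n}$. *)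

theory Defs
  imports "Jordan_Normal_Form.Matrix" "HOL-Library.Extended_Real"
begin

definition mtrace :: "complex mat \<Rightarrow> complex" where
  "mtrace A = (\<Sum>i<dim_row A. A $$ (i,i))"

definition adj :: "complex mat \<Rightarrow> complex mat" where
  "adj A = mat (dim_col A) (dim_row A) (\<lambda>(i,j). cnj (A $$ (j,i)))"

definition hermitian_mat :: "complex mat \<Rightarrow> bool" where
  "hermitian_mat A \<longleftrightarrow> A \<in> carrier_mat (dim_row A) (dim_row A) \<and> adj A = A"

definition unitary_mat :: "complex mat \<Rightarrow> bool" where
  "unitary_mat U \<longleftrightarrow> U \<in> carrier_mat (dim_row U) (dim_row U) \<and> adj U * U = 1\<^sub>m (dim_row U)"

definition psd_mat :: "complex mat \<Rightarrow> bool" where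
  "psd_mat A \<longleftrightarrow> hermitian_mat A \<and>
     (\<forall>v \<in> carrier_vec (dim_row A). 0 \<le> Re (\<Sum>i<dim_row A. cnj (v $ i) * (A *\<^sub>v v) $ i))"

definition density_op :: "nat \<Rightarrow> complex mat \<Rightarrow> bool" where
  "density_op d \<rho> \<longleftrightarrow> \<rho> \<in> carrier_mat d d \<and> psd_mat \<rho> \<and> mtrace \<rho> = 1"

definition real_diag :: "nat \<Rightarrow> (nat \<Rightarrow> real) \<Rightarrow> complex mat" where
  "real_diag n lam = mat n n (\<lambda>(i,j). if i = j then complex_of_real (lam i) else 0)"

definition spectral_decomp :: "complex mat \<Rightarrow> complex mat \<Rightarrow> (nat \<Rightarrow> real) \<Rightarrow> bool" where
  "spectral_decomp A U lam \<longleftrightarrow> unitary_mat U \<and> dim_row U = dim_row A \<and>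
     A = U * real_diag (dim_row A) lam * adj U"

definition mat_fun :: "(real \<Rightarrow> real) \<Rightarrow> complex mat \<Rightarrow> complex mat" where
  "mat_fun f A = (let (U, lam) = (SOME (U, lam). spectral_decomp A U lam)
                  in U * real_diag (dim_row A) (f \<circ> lam) * adj U)"

definition proj_nonneg :: "complex mat \<Rightarrow> complex mat" where
  "proj_nonneg Y = mat_fun (\<lambda>x. if 0 \<le> x then 1 else 0) Y"

definition proj_nonpos :: "complex mat \<Rightarrow> complex mat" where
  "proj_nonpos Y = mat_fun (\<lambda>x. if x \<le> 0 then 1 else 0) Y"

definition proj_ge :: "complex mat \<Rightarrow> real \<Rightarrow> complex mat" where
  "proj_ge \<rho> c = proj_nonneg (\<rho> - complex_of_real c \<cdot>\<^sub>m 1\<^sub>m (dim_row \<rho>))"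

definition proj_le :: "complex mat \<Rightarrow> real \<Rightarrow> complex mat" where
  "proj_le \<rho> c = proj_nonpos (\<rho> - complex_of_real c \<cdot>\<^sub>m 1\<^sub>m (dim_row \<rho>))"

text \<open>Base-2 matrix logarithm; note log 2 0 = 0 in Isabelle, realizing the 0 log 0 = 0 convention.\<close>
definition log2_mat :: "complex mat \<Rightarrow> complex mat" where
  "log2_mat A = mat_fun (log 2) A"

definition vn_entropy :: "complex mat \<Rightarrow> real" where
  "vn_entropy \<rho> = - Re (mtrace (\<rho> * log2_mat \<rho>))"

text \<open>Relative entropy, +infinity unless supp sigma is contained in supp rho.\<close>
definition rel_entropy :: "complex mat \<Rightarrow> complex mat \<Rightarrow> ereal" where
  "rel_entropy \<sigma> \<rho> =
     (if (\<forall>v \<in> carrier_vec (dim_row \<rho>). \<rho> *\<^sub>v v = 0\<^sub>v (dim_row \<rho>) \<longrightarrow> \<sigma> *\<^sub>v v = 0\<^sub>v (dim_row \<rho>))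
      then ereal (Re (mtrace (\<sigma> * (log2_mat \<sigma> - log2_mat \<rho>))))
      else \<infinity>)"

definition kron :: "complex mat \<Rightarrow> complex mat \<Rightarrow> complex mat" where
  "kron A B = mat (dim_row A * dim_row B) (dim_col A * dim_col B)
     (\<lambda>(i,j). A $$ (i div dim_row B, j div dim_col B) * B $$ (i mod dim_row B, j mod dim_col B))"

fun tensor_pow :: "complex mat \<Rightarrow> nat \<Rightarrow> complex mat" where
  "tensor_pow \<rho> 0 = 1\<^sub>m 1"
| "tensor_pow \<rho> (Suc n) = kron (tensor_pow \<rho> n) \<rho>"

section \<open>Information spectrum entropies (extended reals, so empty/unbounded cases are handled)\<close>

definition sup_spec_entropy :: "real \<Rightarrow> complex mat \<Rightarrow> ereal" where
  "sup_spec_entropy \<epsilon> \<rho> =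
     Inf (ereal ` {l. Re (mtrace (proj_ge \<rho> (2 powr (-l)) * \<rho>)) \<ge> 1 - \<epsilon>})"

definition inf_spec_entropy :: "real \<Rightarrow> complex mat \<Rightarrow> ereal" where
  "inf_spec_entropy \<epsilon> \<rho> =
     Sup (ereal ` {l. Re (mtrace (proj_le \<rho> (2 powr (-l)) * \<rho>)) \<ge> 1 - \<epsilon>})"

definition D_bar :: "complex mat \<Rightarrow> real \<Rightarrow> ereal" where
  "D_bar \<rho> \<gamma> = Inf {rel_entropy \<sigma> \<rho> | \<sigma>. density_op (dim_row \<rho>) \<sigma> \<and> \<rho> * \<sigma> = \<sigma> * \<rho> \<and>
        ereal (vn_entropy \<sigma>) + rel_entropy \<sigma> \<rho> > ereal (vn_entropy \<rho> + \<gamma>)}"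

definition D_under :: "complex mat \<Rightarrow> real \<Rightarrow> ereal" where
  "D_under \<rho> \<gamma> = Inf {rel_entropy \<sigma> \<rho> | \<sigma>. density_op (dim_row \<rho>) \<sigma> \<and> \<rho> * \<sigma> = \<sigma> * \<rho> \<and>
        ereal (vn_entropy \<sigma>) + rel_entropy \<sigma> \<rho> < ereal (vn_entropy \<rho> - \<gamma>)}"

text \<open>(1+n)^d * 2^(-n D), with 2^(-infinity) = 0 (the -infinity case cannot occur since D >= 0).\<close>
definition eps_of :: "nat \<Rightarrow> nat \<Rightarrow> ereal \<Rightarrow> real" where
  "eps_of d n D = (1 + real n) ^ d *
     (case ereal (real n) * D of ereal r \<Rightarrow> 2 powr (- r) | _ \<Rightarrow> 0)"

end

theory Submission
  imports Defs "Jordan_Normal_Form.Schur_Decomposition" "Jordan_Normal_Form.Spectral_Radius" "HOL-Library.FuncSet"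
begin

lemma mult_entry:
  assumes "A \<in> carrier_mat n m" "B \<in> carrier_mat m p" "i < n" "j < p"
  shows "(A * B) $$ (i,j) = (\<Sum>k<m. A $$ (i,k) * B $$ (k,j))"
  using assms by (auto simp: scalar_prod_def lessThan_atLeast0 intro!: sum.cong)

lemma adj_entry[simp]: "i < dim_col A \<Longrightarrow> j < dim_row A \<Longrightarrow> adj A $$ (i,j) = cnj (A $$ (j,i))"
  unfolding adj_def by auto

lemma adj_dim[simp]: "dim_row (adj A) = dim_col A" "dim_col (adj A) = dim_row A"
  unfolding adj_def by auto

lemma adj_carrier[simp]: "A \<in> carrier_mat n m \<Longrightarrow> adj A \<in> carrier_mat m n"
  by auto

lemma adj_adj[simp]: "adj (adj A) = A"
  by (rule eq_matI) auto

lemma adj_mult: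
  assumes "A \<in> carrier_mat n m" "B \<in> carrier_mat m p"
  shows "adj (A * B) = adj B * adj A"
proof (rule eq_matI)
  fix i j assume ij: "i < dim_row (adj B * adj A)" "j < dim_col (adj B * adj A)"
  hence i: "i < p" and j: "j < n" using assms by auto
  have "adj (A * B) $$ (i,j) = cnj ((A*B) $$ (j,i))" using i j assms by simp
  also have "\<dots> = (\<Sum>k<m. cnj (A $$ (j,k)) * cnj (B $$ (k,i)))"
    by (subst mult_entry[OF assms j i]) simp
  also have "\<dots> = (adj B * adj A) $$ (i,j)"
    by (subst mult_entry[of _ p m _ n]) (use assms i j in \<open>auto simp: mult.commute intro!: sum.cong\<close>)
  finally show "adj (A * B) $$ (i,j) = (adj B * adj A) $$ (i,j)" .
qed (use assms in auto)

lemma unitary_right: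
  assumes "U \<in> carrier_mat n n" "adj U * U = 1\<^sub>m n"
  shows "U * adj U = 1\<^sub>m n"
  using mat_mult_left_right_inverse[of "adj U" n U] assms by auto

lemma cscalar_real:
  fixes w :: "complex vec"
  shows "w \<bullet>c w = complex_of_real (Re (w \<bullet>c w))" "Re (w \<bullet>c w) \<ge> 0"
proof -
  have "w \<bullet>c w \<ge> 0" by (rule conjugate_square_ge_0_vec)
  thus "w \<bullet>c w = complex_of_real (Re (w \<bullet>c w))" "Re (w \<bullet>c w) \<ge> 0"
    by (auto simp: less_eq_complex_def complex_eq_iff)
qed

lemma cscalar_sum: "w \<in> carrier_vec n \<Longrightarrow> u \<in> carrier_vec n \<Longrightarrow>
   w \<bullet>c u = (\<Sum>k<n. w $ k * cnj (u $ k))"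
  by (auto simp: scalar_prod_def lessThan_atLeast0 intro!: sum.cong)

lemma unitary_completion:
  fixes v :: "complex vec"
  assumes v: "v \<in> carrier_vec n" and v1: "v \<bullet>c v = 1"
  shows "\<exists>W. W \<in> carrier_mat n n \<and> adj W * W = 1\<^sub>m n \<and> (\<forall>k<n. W $$ (k,0) = v $ k) \<and> n > 0"
proof -
  have v0: "v \<noteq> 0\<^sub>v n" using v1 v by auto
  hence n: "n > 0" using v by (cases n) auto
  interpret cof_vec_space n "TYPE(complex)" .
  define b where "b = basis_completion v"
  from basis_completion[OF v v0, folded b_def]
  have dist_b: "distinct b" and indep: "\<not> lin_dep (set b)" and b: "set b \<subseteq> carrier_vec n"
    and hdb: "hd b = v" and len_b: "length b = n" by auto
  from hdb len_b n obtain vs where bv: "b = v # vs" by (cases b, auto)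
  define ws where "ws = gram_schmidt n b"
  from gram_schmidt_result[OF b dist_b indep refl, folded ws_def]
  have ws: "set ws \<subseteq> carrier_vec n" "corthogonal ws" "length ws = n"
    by (auto simp: len_b)
  from gram_schmidt_hd[OF v, of vs, folded bv] have hdws: "hd ws = v" unfolding ws_def .
  define c where "c i = complex_of_real (1 / sqrt (Re (ws ! i \<bullet>c ws ! i)))" for i
  define W where "W = mat n n (\<lambda>(k,i). c i * ws ! i $ k)"
  have wsi: "i < n \<Longrightarrow> ws ! i \<in> carrier_vec n" for i using ws by auto
  have pos: "i < n \<Longrightarrow> Re (ws ! i \<bullet>c ws ! i) > 0" for i
  proof -
    assume i: "i < n"
    have "ws ! i \<bullet>c ws ! i \<noteq> 0" using ws(2) i ws(3) by (auto simp: corthogonal_def)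
    thus ?thesis using cscalar_real[of "ws ! i"] by (metis less_eq_real_def of_real_0)
  qed
  have WW: "adj W * W = 1\<^sub>m n"
  proof (rule eq_matI)
    fix i j assume "i < dim_row (1\<^sub>m n)" "j < dim_col (1\<^sub>m n)"
    hence i: "i < n" and j: "j < n" by auto
    have "(adj W * W) $$ (i,j) = (\<Sum>k<n. cnj (c i * ws ! i $ k) * (c j * ws ! j $ k))"
      by (subst mult_entry[of _ n n _ n]) (use i j in \<open>auto simp: W_def\<close>)
    also have "\<dots> = cnj (c i) * c j * (ws ! j \<bullet>c ws ! i)"
      by (subst cscalar_sum[OF wsi[OF j] wsi[OF i]]) (auto simp: sum_distrib_left intro!: sum.cong)
    also have "\<dots> = 1\<^sub>m n $$ (i,j)"
    proof (cases "i = j")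
      case True
      have r: "ws ! i \<bullet>c ws ! i = complex_of_real (Re (ws ! i \<bullet>c ws ! i))" by (rule cscalar_real)
      have "cnj (c i) * c i * complex_of_real (Re (ws ! i \<bullet>c ws ! i)) = 1"
        using pos[OF i] unfolding c_def
        by (simp flip: of_real_mult)
      then show ?thesis using True i r by simp
    next
      case False
      then show ?thesis using ws(2) i j ws(3) by (auto simp: corthogonal_def)
    qed
    finally show "(adj W * W) $$ (i,j) = 1\<^sub>m n $$ (i,j)" .
  qed (auto simp: W_def)
  have "ws ! 0 = v" using hdws n ws(3) by (cases ws) auto
  moreover have "Re (v \<bullet>c v) = 1" using v1 by simp
  ultimately have "c 0 = 1" by (simp add: c_def)
  hence "\<forall>k<n. W $$ (k,0) = v $ k" using n \<open>ws ! 0 = v\<close> by (auto simp: W_def)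
  with WW n show ?thesis by (intro exI[of _ W]) (auto simp: W_def)
qed

lemma mv_entry: "A \<in> carrier_mat n m \<Longrightarrow> v \<in> carrier_vec m \<Longrightarrow> i < n \<Longrightarrow>
   (A *\<^sub>v v) $ i = (\<Sum>k<m. A $$ (i,k) * v $ k)"
  by (auto simp: scalar_prod_def lessThan_atLeast0 intro!: sum.cong)

lemma herm_eigen:
  fixes A :: "complex mat"
  assumes A: "A \<in> carrier_mat n n" and h: "adj A = A" and n: "n > 0"
  shows "\<exists>u e. u \<in> carrier_vec n \<and> u \<bullet>c u = 1 \<and> A *\<^sub>v u = complex_of_real e \<cdot>\<^sub>v u"
proof -
  from spectrum_non_empty[OF A n] obtain k where "k \<in> spectrum A" by auto
  then obtain v where v: "v \<in> carrier_vec n" "v \<noteq> 0\<^sub>v n" and Av: "A *\<^sub>v v = k \<cdot>\<^sub>v v"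
    using A unfolding spectrum_def eigenvalue_def eigenvector_def by auto
  define r where "r = Re (v \<bullet>c v)"
  have rpos: "r > 0" using conjugate_square_greater_0_vec[OF v(1)] v(2) cscalar_real[of v]
    unfolding r_def by (metis less_complex_def zero_complex.sel(1))
  have vr: "v \<bullet>c v = complex_of_real r" unfolding r_def by (rule cscalar_real)
  define c where "c = complex_of_real (1 / sqrt r)"
  define u where "u = c \<cdot>\<^sub>v v"
  have u: "u \<in> carrier_vec n" using v unfolding u_def by auto
  have "u \<bullet>c u = c * cnj c * (v \<bullet>c v)"
    using v u by (simp add: cscalar_sum[of _ n] u_def sum_distrib_left algebra_simps)
  also have "\<dots> = 1" using rpos unfolding vr c_def by (simp flip: of_real_mult)
  finally have u1: "u \<bullet>c u = 1" .
  have Au: "A *\<^sub>v u = k \<cdot>\<^sub>v u"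
    unfolding u_def using mult_mat_vec[OF A v(1)] Av by (auto simp: smult_smult_assoc mult.commute)
  define q where "q = (\<Sum>i<n. cnj (u $ i) * (A *\<^sub>v u) $ i)"
  have "q = k * (\<Sum>i<n. u $ i * cnj (u $ i))"
    unfolding q_def Au using u by (auto simp: sum_distrib_left intro!: sum.cong)
  also have "(\<Sum>i<n. u $ i * cnj (u $ i)) = 1" using u1 cscalar_sum[OF u u] by simp
  finally have qk: "q = k" by simp
  have Ae: "i < n \<Longrightarrow> l < n \<Longrightarrow> cnj (A $$ (i,l)) = A $$ (l,i)" for i l
    using arg_cong[OF h, of "\<lambda>M. M $$ (l,i)"] A by auto
  have mvu: "i < n \<Longrightarrow> (A *\<^sub>v u) $ i = (\<Sum>l<n. A $$ (i,l) * u $ l)" for i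
    using mv_entry[OF A u] by simp
  have "cnj q = (\<Sum>i<n. \<Sum>l<n. u $ i * cnj (A $$ (i,l)) * cnj (u $ l))"
    unfolding q_def using u A by (simp add: mvu sum_distrib_left algebra_simps del: index_mult_mat_vec)
  also have "\<dots> = (\<Sum>i<n. \<Sum>l<n. cnj (u $ l) * A $$ (l,i) * u $ i)"
    by (intro sum.cong refl) (simp add: Ae)
  also have "\<dots> = q"
    unfolding q_def using u A by (subst sum.swap) (simp add: mvu sum_distrib_left algebra_simps del: index_mult_mat_vec)
  finally have "cnj k = k" using qk by simp
  hence "k = complex_of_real (Re k)" by (metis Reals_cnj_iff complex_is_Real_iff of_real_Re)
  thus ?thesis using u u1 Au by (intro exI[of _ u] exI[of _ "Re k"]) auto
qed

definition ext :: "nat \<Rightarrow> complex \<Rightarrow> complex mat \<Rightarrow> complex mat" where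
  "ext m c M = mat (Suc m) (Suc m) (\<lambda>(i,j). if i = 0 \<and> j = 0 then c else if i = 0 \<or> j = 0 then 0
     else M $$ (i - 1, j - 1))"

lemma ext_carrier[simp]: "ext m c M \<in> carrier_mat (Suc m) (Suc m)"
  by (auto simp: ext_def)

lemma sum_Suc_shift: "(\<Sum>k<Suc m. f k) = f 0 + (\<Sum>k<m. f (Suc k))"
  by (rule sum.lessThan_Suc_shift)

lemma ext_mult:
  assumes "M \<in> carrier_mat m m" "N \<in> carrier_mat m m"
  shows "ext m a M * ext m b N = ext m (a * b) (M * N)"
proof (rule eq_matI)
  fix i j assume "i < dim_row (ext m (a * b) (M * N))" "j < dim_col (ext m (a * b) (M * N))"
  hence i: "i < Suc m" and j: "j < Suc m" by (auto simp: ext_def)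
  have "(ext m a M * ext m b N) $$ (i,j) = (\<Sum>k<Suc m. ext m a M $$ (i,k) * ext m b N $$ (k,j))"
    by (rule mult_entry[OF ext_carrier ext_carrier i j])
  also have "\<dots> = ext m (a * b) (M * N) $$ (i,j)"
    unfolding sum_Suc_shift using i j assms
    by (cases i; cases j) (auto simp: ext_def mult_entry[OF assms] simp del: index_mult_mat)
  finally show "(ext m a M * ext m b N) $$ (i,j) = ext m (a * b) (M * N) $$ (i,j)" .
qed (auto simp: ext_def)

lemma ext_adj: "M \<in> carrier_mat m m \<Longrightarrow> adj (ext m a M) = ext m (cnj a) (adj M)"
  by (rule eq_matI) (auto simp: ext_def)

lemma ext_one: "ext m 1 (1\<^sub>m m) = 1\<^sub>m (Suc m)"
  by (rule eq_matI) (auto simp: ext_def)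

lemma ext_diag: "ext m (complex_of_real e) (real_diag m lam) =
   real_diag (Suc m) (\<lambda>i. if i = 0 then e else lam (i - 1))"
  by (rule eq_matI) (auto simp: ext_def real_diag_def)

lemma real_diag_carrier[simp]: "real_diag n lam \<in> carrier_mat n n"
  by (auto simp: real_diag_def)

theorem spectral_exists:
  fixes A :: "complex mat"
  assumes "A \<in> carrier_mat n n" "adj A = A"
  shows "\<exists>U lam. U \<in> carrier_mat n n \<and> adj U * U = 1\<^sub>m n \<and> A = U * real_diag n lam * adj U"
  using assms
proof (induction n arbitrary: A)
  case 0
  show ?case
    by (rule exI[of _ "1\<^sub>m 0"], rule exI[of _ "\<lambda>_. 0"]) (use 0 in \<open>auto intro!: eq_matI\<close>)
next
  case (Suc m A)
  note A = Suc.prems(1) and h = Suc.prems(2)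
  let ?n = "Suc m"
  obtain u e where u: "u \<in> carrier_vec ?n" "u \<bullet>c u = 1" and Au: "A *\<^sub>v u = complex_of_real e \<cdot>\<^sub>v u"
    using herm_eigen[OF A h] by auto
  obtain W where W: "W \<in> carrier_mat ?n ?n" "adj W * W = 1\<^sub>m ?n" and W0: "\<forall>k<?n. W $$ (k,0) = u $ k"
    using unitary_completion[OF u] by auto
  have WW': "W * adj W = 1\<^sub>m ?n" using unitary_right[OF W] .
  define B where "B = adj W * (A * W)"
  have B: "B \<in> carrier_mat ?n ?n" using W A by (auto simp: B_def)
  have hB: "adj B = B" unfolding B_def using W A h
    by (simp add: adj_mult[of _ ?n ?n _ ?n] assoc_mult_mat[of _ ?n ?n _ ?n _ ?n])
  have AW0: "k < ?n \<Longrightarrow> (A * W) $$ (k,0) = complex_of_real e * u $ k" for k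
  proof -
    assume k: "k < ?n"
    have "(A * W) $$ (k,0) = (\<Sum>l<?n. A $$ (k,l) * u $ l)"
      using mult_entry[OF A W(1) k, of 0] W0 by simp
    also have "\<dots> = (A *\<^sub>v u) $ k" using mv_entry[OF A u(1) k] by simp
    finally show ?thesis using Au k u by simp
  qed
  have Bc0: "i < ?n \<Longrightarrow> B $$ (i,0) = (if i = 0 then complex_of_real e else 0)" for i
  proof -
    assume i: "i < ?n"
    have "B $$ (i,0) = (\<Sum>k<?n. adj W $$ (i,k) * (A * W) $$ (k,0))"
      unfolding B_def by (rule mult_entry[of _ ?n ?n _ ?n]) (use W A i in auto)
    also have "\<dots> = complex_of_real e * (\<Sum>k<?n. adj W $$ (i,k) * W $$ (k,0))"
      by (simp add: AW0 W0 sum_distrib_left algebra_simps)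
    also have "(\<Sum>k<?n. adj W $$ (i,k) * W $$ (k,0)) = (adj W * W) $$ (i,0)"
      by (rule mult_entry[symmetric, of _ ?n ?n _ ?n]) (use W i in auto)
    finally show ?thesis using W(2) i by simp
  qed
  have Br0: "j < ?n \<Longrightarrow> B $$ (0,j) = (if j = 0 then complex_of_real e else 0)" for j
  proof -
    assume j: "j < ?n"
    have "B $$ (0,j) = adj B $$ (0,j)" using hB by simp
    also have "\<dots> = cnj (B $$ (j,0))" using B j by simp
    finally show ?thesis using Bc0[OF j] by simp
  qed
  define A3 where "A3 = mat m m (\<lambda>(i,j). B $$ (Suc i, Suc j))"
  have A3: "A3 \<in> carrier_mat m m" by (simp add: A3_def)
  have hA3: "adj A3 = A3"
  proof (rule eq_matI)
    fix i j assume "i < dim_row A3" "j < dim_col A3"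
    hence i: "i < m" and j: "j < m" by (auto simp: A3_def)
    have "adj A3 $$ (i,j) = cnj (B $$ (Suc j, Suc i))" using i j by (simp add: A3_def)
    also have "\<dots> = adj B $$ (Suc i, Suc j)" using B i j by simp
    finally show "adj A3 $$ (i,j) = A3 $$ (i,j)" using hB i j by (simp add: A3_def)
  qed (auto simp: A3_def)
  have Bext: "B = ext m (complex_of_real e) A3"
  proof (rule eq_matI)
    fix i j assume "i < dim_row (ext m (complex_of_real e) A3)" "j < dim_col (ext m (complex_of_real e) A3)"
    hence i: "i < ?n" and j: "j < ?n" by (auto simp: ext_def)
    show "B $$ (i,j) = ext m (complex_of_real e) A3 $$ (i,j)"
      using Bc0[OF i] Br0[OF j] i j by (cases i; cases j) (auto simp: ext_def A3_def)
  qed (use B in \<open>auto simp: ext_def\<close>)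
  obtain U3 lam3 where U3: "U3 \<in> carrier_mat m m" "adj U3 * U3 = 1\<^sub>m m"
    and A3d: "A3 = U3 * real_diag m lam3 * adj U3"
    using Suc.IH[OF A3 hA3] by auto
  define U' where "U' = ext m 1 U3"
  define lam where "lam = (\<lambda>i. if i = 0 then e else lam3 (i - 1))"
  have U': "U' \<in> carrier_mat ?n ?n" by (simp add: U'_def)
  have U'U': "adj U' * U' = 1\<^sub>m ?n"
    unfolding U'_def using U3 by (simp add: ext_adj ext_mult ext_one)
  have BU: "B = U' * real_diag ?n lam * adj U'"
    unfolding U'_def lam_def ext_diag[symmetric] Bext A3d using U3
    by (simp add: ext_adj ext_mult)
  define U where "U = W * U'"
  have U: "U \<in> carrier_mat ?n ?n" using W U' by (simp add: U_def)
  have e1: "adj W * (W * U') = (adj W * W) * U'"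
    by (rule assoc_mult_mat[symmetric]) (use W U' in auto)
  have "adj U * U = adj U' * (adj W * (W * U'))"
    unfolding U_def using W U' by (simp add: adj_mult[of _ ?n ?n _ ?n] assoc_mult_mat[of _ ?n ?n _ ?n _ ?n])
  also have "\<dots> = 1\<^sub>m ?n" unfolding e1 W(2) using U' U'U' by simp
  finally have UU: "adj U * U = 1\<^sub>m ?n" .
  have "U * real_diag ?n lam * adj U = W * (U' * real_diag ?n lam * adj U') * adj W"
    unfolding U_def using W U' by (simp add: adj_mult[of _ ?n ?n _ ?n] assoc_mult_mat[of _ ?n ?n _ ?n _ ?n] mult_carrier_mat[of _ ?n ?n _ ?n])
  also have "\<dots> = W * B * adj W" using BU by simp
  also have "\<dots> = (W * adj W) * A * (W * adj W)"
    unfolding B_def using W A by (simp add: assoc_mult_mat[of _ ?n ?n _ ?n _ ?n] mult_carrier_mat[of _ ?n ?n _ ?n])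
  also have "\<dots> = A" unfolding WW' using A by simp
  finally show ?case using U UU by blast
qed

definition uni :: "nat \<Rightarrow> complex mat \<Rightarrow> bool" where
  "uni n U \<longleftrightarrow> U \<in> carrier_mat n n \<and> adj U * U = 1\<^sub>m n"

definition cj :: "nat \<Rightarrow> complex mat \<Rightarrow> (nat \<Rightarrow> real) \<Rightarrow> complex mat" where
  "cj n U a = U * real_diag n a * adj U"

lemma uniD: "uni n U \<Longrightarrow> U \<in> carrier_mat n n" "uni n U \<Longrightarrow> adj U * U = 1\<^sub>m n"
  "uni n U \<Longrightarrow> U * adj U = 1\<^sub>m n" "uni n U \<Longrightarrow> dim_row U = n" "uni n U \<Longrightarrow> dim_col U = n"
  unfolding uni_def using unitary_right by auto

lemma real_diag_index[simp]: "i < n \<Longrightarrow> j < n \<Longrightarrow> real_diag n a $$ (i,j) = (if i = j then complex_of_real (a i) else 0)"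
  "dim_row (real_diag n a) = n" "dim_col (real_diag n a) = n"
  by (auto simp: real_diag_def)

lemma assoc_dims: fixes A B C :: "complex mat" assumes "dim_col A = dim_row B" "dim_col B = dim_row C" shows "(A * B) * C = A * (B * C)"
proof -
  have "B \<in> carrier_mat (dim_col A) (dim_col B)" using assms(1) by (intro carrier_matI) simp_all
  moreover have "C \<in> carrier_mat (dim_col B) (dim_col C)" using assms(2) by (intro carrier_matI) simp_all
  ultimately show ?thesis by (intro assoc_mult_mat[OF carrier_mat_triv])
qed

lemma sq_mult[simp]: "A \<in> carrier_mat n n \<Longrightarrow> B \<in> carrier_mat n n \<Longrightarrow> A * B \<in> carrier_mat n n"
  by (rule mult_carrier_mat)

lemma sq_assoc: "A \<in> carrier_mat n n \<Longrightarrow> B \<in> carrier_mat n n \<Longrightarrow> C \<in> carrier_mat n n \<Longrightarrow>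
  (A * B) * C = A * (B * C)"
  by (rule assoc_mult_mat)

lemma ifz: "(if P then x else 0) * (y::complex) = (if P then x * y else 0)"
  "y * (if P then x else 0) = (if P then y * x else 0)" by auto

lemma cj_dims[simp]: "dim_row (cj n U a) = dim_row U" "dim_col (cj n U a) = dim_row U"
  by (auto simp: cj_def)

lemma cj_carrier[simp]: "uni n U \<Longrightarrow> cj n U a \<in> carrier_mat n n"
  unfolding cj_def uni_def by auto

lemma cj_entry: assumes "uni n U" "i < n" "j < n"
  shows "cj n U a $$ (i,j) = (\<Sum>k<n. U $$ (i,k) * complex_of_real (a k) * cnj (U $$ (j,k)))"
proof -
  have U: "U \<in> carrier_mat n n" using assms uniD by auto
  have UD: "U * real_diag n a \<in> carrier_mat n n" using U by simp
  have e: "k < n \<Longrightarrow> (U * real_diag n a) $$ (i,k) = U $$ (i,k) * complex_of_real (a k)" for k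
    using U assms by (simp add: mult_entry[OF U real_diag_carrier] ifz sum.delta sum.delta'
       del: index_mult_mat)
  show ?thesis unfolding cj_def
    using mult_entry[OF UD adj_carrier[OF U] assms(2,3)] U assms e by simp
qed

lemma diag_left: "X \<in> carrier_mat n n \<Longrightarrow> i < n \<Longrightarrow> j < n \<Longrightarrow>
   (real_diag n a * X) $$ (i,j) = complex_of_real (a i) * X $$ (i,j)"
  by (simp add: mult_entry[of _ n n _ n] ifz sum.delta sum.delta' del: index_mult_mat)

lemma diag_right: "X \<in> carrier_mat n n \<Longrightarrow> i < n \<Longrightarrow> j < n \<Longrightarrow>
   (X * real_diag n a) $$ (i,j) = X $$ (i,j) * complex_of_real (a j)"
  by (simp add: mult_entry[of _ n n _ n] ifz sum.delta sum.delta' del: index_mult_mat)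

lemma diag_mult: "real_diag n a * real_diag n b = real_diag n (\<lambda>i. a i * b i)"
  by (rule eq_matI) (auto simp: diag_left[OF real_diag_carrier] simp del: index_mult_mat simp add: index_mult_mat(2,3))

lemma cj_mult: assumes "uni n U" shows "cj n U a * cj n U b = cj n U (\<lambda>i. a i * b i)"
proof -
  have U: "U \<in> carrier_mat n n" "adj U * U = 1\<^sub>m n" using assms uniD by auto
  have c1: "real_diag n b * adj U \<in> carrier_mat n n" by (rule mult_carrier_mat[OF real_diag_carrier adj_carrier[OF U(1)]])
  have "cj n U a * cj n U b = U * real_diag n a * (adj U * U) * real_diag n b * adj U"
    unfolding cj_def using U(1)
    by (simp add: assoc_mult_mat[of _ n n _ n _ n] mult_carrier_mat[of _ n n _ n])
  also have "\<dots> = U * (real_diag n a * real_diag n b) * adj U"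
    unfolding U(2) using U(1) c1
    by (simp add: assoc_mult_mat[of _ n n _ n _ n] mult_carrier_mat[of _ n n _ n])
  finally show ?thesis unfolding diag_mult cj_def .
qed

lemma cj_minus: assumes "uni n U" shows "cj n U a - cj n U b = cj n U (\<lambda>i. a i - b i)"
  by (rule eq_matI) (use assms in \<open>auto simp: cj_entry uniD sum_subtractf[symmetric] algebra_simps
    intro!: sum.cong\<close>)

lemma cj_adj: assumes "uni n U" shows "adj (cj n U a) = cj n U a"
  by (rule eq_matI) (use assms in \<open>auto simp: cj_entry uniD mult.commute mult.left_commute\<close>)

lemma sum_unit_row: assumes "uni n U" "k < n" "l < n"
  shows "(\<Sum>i<n. U $$ (k,i) * cnj (U $$ (l,i))) = (if k = l then 1 else 0)"
proof -
  have "(\<Sum>i<n. U $$ (k,i) * cnj (U $$ (l,i))) = (U * adj U) $$ (k,l)"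
    using assms uniD(1)[OF assms(1)] by (subst mult_entry[of _ n n _ n]) auto
  thus ?thesis using assms uniD(3)[OF assms(1)] by simp
qed

lemma cj_const: assumes "uni n U" shows "cj n U (\<lambda>_. c) = complex_of_real c \<cdot>\<^sub>m 1\<^sub>m n"
proof (rule eq_matI)
  fix i j assume "i < dim_row (complex_of_real c \<cdot>\<^sub>m 1\<^sub>m n)" "j < dim_col (complex_of_real c \<cdot>\<^sub>m 1\<^sub>m n)"
  hence i: "i < n" and j: "j < n" by auto
  have "cj n U (\<lambda>_. c) $$ (i,j) = complex_of_real c * (\<Sum>k<n. U $$ (i,k) * cnj (U $$ (j,k)))"
    by (simp add: cj_entry[OF assms i j] sum_distrib_left algebra_simps)
  thus "cj n U (\<lambda>_. c) $$ (i,j) = (complex_of_real c \<cdot>\<^sub>m 1\<^sub>m n) $$ (i,j)"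
    using sum_unit_row[OF assms i j] i j by simp
qed (use assms in \<open>auto simp: uniD\<close>)

lemma sum_unit_col: assumes "uni n U" "k < n" "l < n"
  shows "(\<Sum>i<n. cnj (U $$ (i,k)) * U $$ (i,l)) = (if k = l then 1 else 0)"
proof -
  have "(\<Sum>i<n. cnj (U $$ (i,k)) * U $$ (i,l)) = (adj U * U) $$ (k,l)"
    using assms uniD(1)[OF assms(1)] by (subst mult_entry[of _ n n _ n]) auto
  thus ?thesis using assms uniD(2)[OF assms(1)] by simp
qed

lemma cj_trace: assumes "uni n U" shows "mtrace (cj n U a) = (\<Sum>i<n. complex_of_real (a i))"
proof -
  have "mtrace (cj n U a) = (\<Sum>i<n. \<Sum>k<n. U $$ (i,k) * complex_of_real (a k) * cnj (U $$ (i,k)))"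
    unfolding mtrace_def using assms by (simp add: cj_entry uniD)
  also have "\<dots> = (\<Sum>k<n. complex_of_real (a k) * (\<Sum>i<n. cnj (U $$ (i,k)) * U $$ (i,k)))"
    by (subst sum.swap) (simp add: sum_distrib_left algebra_simps)
  also have "\<dots> = (\<Sum>k<n. complex_of_real (a k))"
    using sum_unit_col[OF assms] by simp
  finally show ?thesis .
qed

declare assoc_dims[simp]

lemma right_one_dims[simp]: "dim_col A = n \<Longrightarrow> A * 1\<^sub>m n = (A :: complex mat)"
  by (rule right_mult_one_mat) (auto intro: carrier_matI)

lemma left_one_dims[simp]: "dim_row A = n \<Longrightarrow> 1\<^sub>m n * A = (A :: complex mat)"
  by (rule left_mult_one_mat) (auto intro: carrier_matI)

lemma uni_cancel[simp]: assumes "uni n U" "dim_row M = n"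
  shows "adj U * (U * M) = M" "U * (adj U * M) = M"
proof -
  have U: "U \<in> carrier_mat n n" using assms uniD by auto
  have M: "M \<in> carrier_mat n (dim_col M)" using assms(2) by (intro carrier_matI) auto
  have "adj U * (U * M) = (adj U * U) * M" by (rule assoc_mult_mat[symmetric, OF adj_carrier[OF U] U M])
  thus "adj U * (U * M) = M" using assms(1) M by (simp add: uniD)
  have "U * (adj U * M) = (U * adj U) * M" by (rule assoc_mult_mat[symmetric, OF U adj_carrier[OF U] M])
  thus "U * (adj U * M) = M" using assms(1) M by (simp add: uniD)
qed

lemma fc_unique:
  assumes U: "uni n U" and V: "uni n V" and eq: "cj n U a = cj n V b"
  shows "cj n U (f \<circ> a) = cj n V (f \<circ> b)"
proof -
  have Uc: "U \<in> carrier_mat n n" and Vc: "V \<in> carrier_mat n n" using U V uniD by auto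
  define X where "X = adj V * U"
  have X: "X \<in> carrier_mat n n" using Uc Vc by (simp add: X_def mult_carrier_mat)
  have e1: "adj V * cj n U a * U = X * real_diag n a"
    unfolding cj_def X_def using U V by (simp add: uniD)
  have e2: "adj V * cj n V b * U = real_diag n b * X"
    unfolding cj_def X_def using U V by (simp add: uniD)
  have comm: "real_diag n b * X = X * real_diag n a" using e1 e2 eq by simp
  have commf: "real_diag n (f \<circ> b) * X = X * real_diag n (f \<circ> a)"
  proof (rule eq_matI)
    fix i j assume "i < dim_row (X * real_diag n (f \<circ> a))" "j < dim_col (X * real_diag n (f \<circ> a))"
    hence i: "i < n" and j: "j < n" using X by auto
    have "complex_of_real (b i) * X $$ (i,j) = X $$ (i,j) * complex_of_real (a j)"
      using arg_cong[OF comm, of "\<lambda>M. M $$ (i,j)"] diag_left[OF X i j] diag_right[OF X i j] by simp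
    hence "X $$ (i,j) = 0 \<or> b i = a j" by (auto simp: mult.commute)
    hence "complex_of_real (f (b i)) * X $$ (i,j) = X $$ (i,j) * complex_of_real (f (a j))" by auto
    thus "(real_diag n (f \<circ> b) * X) $$ (i,j) = (X * real_diag n (f \<circ> a)) $$ (i,j)"
      using diag_left[OF X i j] diag_right[OF X i j] by simp
  qed (use X in auto)
  have "cj n U (f \<circ> a) = V * ((X * real_diag n (f \<circ> a)) * adj U)"
    unfolding cj_def X_def using U V by (simp add: uniD)
  also have "\<dots> = V * ((real_diag n (f \<circ> b) * X) * adj U)" unfolding commf ..
  also have "\<dots> = cj n V (f \<circ> b)"
    unfolding cj_def X_def using U V by (simp add: uniD)
  finally show ?thesis .
qed

lemma mat_fun_cj: assumes U: "uni n U" shows "mat_fun f (cj n U a) = cj n U (f \<circ> a)"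
proof -
  have Uc: "U \<in> carrier_mat n n" using U uniD by auto
  have "spectral_decomp (cj n U a) U a"
    unfolding spectral_decomp_def unitary_mat_def using U Uc by (auto simp: uniD cj_def)
  hence "\<exists>p. (case p of (V, mu) \<Rightarrow> spectral_decomp (cj n U a) V mu)" by auto
  hence sd: "case (SOME p. case p of (V, mu) \<Rightarrow> spectral_decomp (cj n U a) V mu) of (V, mu) \<Rightarrow>
      spectral_decomp (cj n U a) V mu" by (rule someI_ex)
  obtain U' lam' where p: "(SOME p. case p of (V, mu) \<Rightarrow> spectral_decomp (cj n U a) V mu) = (U', lam')"
    by (cases "(SOME p. case p of (V, mu) \<Rightarrow> spectral_decomp (cj n U a) V mu)") auto
  from sd[unfolded p] have sd': "spectral_decomp (cj n U a) U' lam'" by simp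
  have dr: "dim_row (cj n U a) = n" using Uc by simp
  from sd' have U': "uni n U'" and eq: "cj n U a = cj n U' lam'"
    unfolding spectral_decomp_def unitary_mat_def uni_def cj_def dr using Uc by auto
  have "mat_fun f (cj n U a) = cj n U' (f \<circ> lam')"
    unfolding mat_fun_def p dr by (simp add: cj_def)
  also have "\<dots> = cj n U (f \<circ> a)" using fc_unique[OF U U' eq] by simp
  finally show ?thesis .
qed

lemma herm_cj: assumes "A \<in> carrier_mat n n" "adj A = A" shows "\<exists>U a. uni n U \<and> A = cj n U a"
  using spectral_exists[OF assms] unfolding uni_def cj_def by blast

definition quad :: "complex mat \<Rightarrow> complex vec \<Rightarrow> complex" where
  "quad A v = (\<Sum>i<dim_row A. cnj (v $ i) * (A *\<^sub>v v) $ i)"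

lemma trace_with_cj: assumes U: "uni n U" and S: "S \<in> carrier_mat n n"
  shows "mtrace (S * cj n U l) = (\<Sum>k<n. complex_of_real (l k) * quad S (col U k))"
proof -
  have Uc: "U \<in> carrier_mat n n" using U uniD by auto
  have "mtrace (S * cj n U l) = (\<Sum>i<n. \<Sum>j<n. S $$ (i,j) * (\<Sum>k<n. U $$ (j,k) * complex_of_real (l k) * cnj (U $$ (i,k))))"
    unfolding mtrace_def using S U by (simp add: uniD mult_entry[OF S cj_carrier[OF U]] cj_entry del: index_mult_mat add: index_mult_mat(2,3))
  also have "\<dots> = (\<Sum>k<n. complex_of_real (l k) * (\<Sum>i<n. cnj (U $$ (i,k)) * (\<Sum>j<n. S $$ (i,j) * U $$ (j,k))))"
    by (simp add: sum_distrib_left sum_distrib_right algebra_simps, subst sum.swap, rule sum.cong, rule refl,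
      rule sum.swap)
  also have "\<dots> = (\<Sum>k<n. complex_of_real (l k) * quad S (col U k))"
    unfolding quad_def using S Uc by (auto intro!: sum.cong simp: mv_entry[OF S] simp del: index_mult_mat_vec)
  finally show ?thesis .
qed

lemma swap3: "(\<Sum>k<n. \<Sum>i<n. \<Sum>j<n. f i j k) = (\<Sum>i<n. \<Sum>j<n. \<Sum>k<n. (f i j k :: complex))"
  by (subst sum.swap, rule sum.cong, rule refl, rule sum.swap)

lemma quad_cj: assumes U: "uni n U" and v: "v \<in> carrier_vec n"
  shows "quad (cj n U a) v = (\<Sum>k<n. complex_of_real (a k) *
     (cnj (\<Sum>j<n. cnj (U $$ (j,k)) * v $ j) * (\<Sum>j<n. cnj (U $$ (j,k)) * v $ j)))"
proof -
  define f where "f i j k = cnj (v $ i) * U $$ (i,k) * complex_of_real (a k) * cnj (U $$ (j,k)) * v $ j" for i j k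
  have "quad (cj n U a) v = (\<Sum>i<n. cnj (v $ i) * (\<Sum>j<n. (\<Sum>k<n. U $$ (i,k) * complex_of_real (a k) * cnj (U $$ (j,k))) * v $ j))"
    unfolding quad_def using U v by (auto simp: uniD mv_entry[OF cj_carrier[OF U] v] cj_entry
      simp del: index_mult_mat_vec intro!: sum.cong)
  also have "\<dots> = (\<Sum>i<n. \<Sum>j<n. \<Sum>k<n. f i j k)"
    unfolding f_def by (simp add: sum_distrib_left sum_distrib_right mult.assoc)
  also have "\<dots> = (\<Sum>k<n. \<Sum>i<n. \<Sum>j<n. f i j k)" by (rule swap3[symmetric])
  also have "\<dots> = (\<Sum>k<n. complex_of_real (a k) *
     (cnj (\<Sum>j<n. cnj (U $$ (j,k)) * v $ j) * (\<Sum>j<n. cnj (U $$ (j,k)) * v $ j)))"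
    unfolding f_def by (simp add: sum_distrib_left sum_distrib_right algebra_simps)
  finally show ?thesis .
qed

lemma sum_lessThan_add: "(\<Sum>k<m + (b::nat). g k) = (\<Sum>k<m. g k) + (\<Sum>j<b. g (m + j) :: 'a :: comm_monoid_add)"
  by (induction b) (auto simp: add.assoc)

lemma sum_divmod: "(\<Sum>k<(a::nat) * b. f (k div b) (k mod b)) = (\<Sum>i<a. \<Sum>j<b. (f i j :: 'a :: comm_monoid_add))"
proof (induction a)
  case 0 then show ?case by simp
next
  case (Suc a)
  have "(\<Sum>k<Suc a * b. f (k div b) (k mod b)) = (\<Sum>k<a * b + b. f (k div b) (k mod b))"
    by (simp add: add.commute)
  also have "\<dots> = (\<Sum>k<a * b. f (k div b) (k mod b)) + (\<Sum>j<b. f ((a * b + j) div b) ((a * b + j) mod b))"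
    by (rule sum_lessThan_add)
  also have "(\<Sum>j<b. f ((a * b + j) div b) ((a * b + j) mod b)) = (\<Sum>j<b. f a j)"
    by (intro sum.cong refl) auto
  finally show ?case using Suc by simp
qed

lemma kron_dims[simp]: "dim_row (kron A B) = dim_row A * dim_row B" "dim_col (kron A B) = dim_col A * dim_col B"
  by (auto simp: kron_def)

lemma div_lt: "i < a * (b::nat) \<Longrightarrow> i div b < a"
  by (simp add: less_mult_imp_div_less)

lemma mod_lt: "i < a * (b::nat) \<Longrightarrow> i mod b < b"
  by (cases "b = 0") auto

lemma kron_index[simp]: "i < dim_row A * dim_row B \<Longrightarrow> j < dim_col A * dim_col B \<Longrightarrow>
  kron A B $$ (i,j) = A $$ (i div dim_row B, j div dim_col B) * B $$ (i mod dim_row B, j mod dim_col B)"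
  by (auto simp: kron_def)

lemma kron_mult:
  assumes A: "A \<in> carrier_mat a1 a2" and B: "B \<in> carrier_mat b1 b2"
    and C: "C \<in> carrier_mat a2 a3" and D: "D \<in> carrier_mat b2 b3"
  shows "kron A B * kron C D = kron (A * C) (B * D)"
proof (rule eq_matI)
  fix i j assume "i < dim_row (kron (A * C) (B * D))" "j < dim_col (kron (A * C) (B * D))"
  hence i: "i < a1 * b1" and j: "j < a3 * b3" using A B C D by auto
  have KA: "kron A B \<in> carrier_mat (a1*b1) (a2*b2)" and KC: "kron C D \<in> carrier_mat (a2*b2) (a3*b3)"
    using A B C D by auto
  have "(kron A B * kron C D) $$ (i,j) = (\<Sum>k<a2*b2. kron A B $$ (i,k) * kron C D $$ (k,j))"
    by (rule mult_entry[OF KA KC i j])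
  also have "\<dots> = (\<Sum>k<a2*b2. (A $$ (i div b1, k div b2) * C $$ (k div b2, j div b3)) *
      (B $$ (i mod b1, k mod b2) * D $$ (k mod b2, j mod b3)))"
    using A B C D i j by (intro sum.cong refl) auto
  also have "\<dots> = (\<Sum>x<a2. \<Sum>y<b2. (A $$ (i div b1, x) * C $$ (x, j div b3)) *
      (B $$ (i mod b1, y) * D $$ (y, j mod b3)))"
    by (rule sum_divmod[where f = "\<lambda>x y. (A $$ (i div b1, x) * C $$ (x, j div b3)) *
      (B $$ (i mod b1, y) * D $$ (y, j mod b3))"])
  also have "\<dots> = (\<Sum>x<a2. A $$ (i div b1, x) * C $$ (x, j div b3)) * (\<Sum>y<b2. B $$ (i mod b1, y) * D $$ (y, j mod b3))"
    by (simp add: sum_product)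
  also have "\<dots> = (A * C) $$ (i div b1, j div b3) * (B * D) $$ (i mod b1, j mod b3)"
    using mult_entry[OF A C div_lt[OF i] div_lt[OF j]] mult_entry[OF B D mod_lt[OF i] mod_lt[OF j]] by simp
  also have "\<dots> = kron (A * C) (B * D) $$ (i,j)" using A B C D i j by simp
  finally show "(kron A B * kron C D) $$ (i,j) = kron (A * C) (B * D) $$ (i,j)" .
qed (use A B C D in auto)

lemma kron_adj: "adj (kron A B) = kron (adj A) (adj B)"
proof (rule eq_matI)
  fix i j assume "i < dim_row (kron (adj A) (adj B))" "j < dim_col (kron (adj A) (adj B))"
  hence i: "i < dim_col A * dim_col B" and j: "j < dim_row A * dim_row B" by auto
  show "adj (kron A B) $$ (i,j) = kron (adj A) (adj B) $$ (i,j)"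
    using i j div_lt[OF i] div_lt[OF j] mod_lt[OF i] mod_lt[OF j] by simp
qed auto

lemma kron_one: "kron (1\<^sub>m a) (1\<^sub>m b) = (1\<^sub>m (a * b) :: complex mat)"
proof (rule eq_matI)
  fix i j assume "i < dim_row (1\<^sub>m (a * b) :: complex mat)" "j < dim_col (1\<^sub>m (a * b) :: complex mat)"
  hence i: "i < a * b" and j: "j < a * b" by auto
  have "(i div b = j div b \<and> i mod b = j mod b) \<longleftrightarrow> i = j" by (metis div_mult_mod_eq)
  thus "kron (1\<^sub>m a) (1\<^sub>m b) $$ (i,j) = (1\<^sub>m (a * b) :: complex mat) $$ (i,j)"
    using i j by (auto simp: div_lt mod_lt)
qed auto

lemma kron_diag: "kron (real_diag a x) (real_diag b y) = real_diag (a * b) (\<lambda>i. x (i div b) * y (i mod b))"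
proof (rule eq_matI)
  fix i j assume "i < dim_row (real_diag (a * b) (\<lambda>i. x (i div b) * y (i mod b)))"
    "j < dim_col (real_diag (a * b) (\<lambda>i. x (i div b) * y (i mod b)))"
  hence i: "i < a * b" and j: "j < a * b" by auto
  have "(i div b = j div b \<and> i mod b = j mod b) \<longleftrightarrow> i = j" by (metis div_mult_mod_eq)
  thus "kron (real_diag a x) (real_diag b y) $$ (i,j) = real_diag (a * b) (\<lambda>i. x (i div b) * y (i mod b)) $$ (i,j)"
    using i j by (auto simp: div_lt mod_lt)
qed auto

lemma uni_kron: assumes U: "uni a U" and V: "uni b V" shows "uni (a * b) (kron U V)"
proof -
  have Uc: "U \<in> carrier_mat a a" and Vc: "V \<in> carrier_mat b b" using U V uniD by auto
  have "adj (kron U V) * kron U V = kron (adj U * U) (adj V * V)"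
    unfolding kron_adj by (rule kron_mult) (use Uc Vc in auto)
  also have "\<dots> = 1\<^sub>m (a * b)" using U V by (simp add: uniD kron_one)
  finally show ?thesis unfolding uni_def using Uc Vc by auto
qed

lemma cj_kron: assumes U: "uni a U" and V: "uni b V"
  shows "kron (cj a U x) (cj b V y) = cj (a * b) (kron U V) (\<lambda>i. x (i div b) * y (i mod b))"
proof -
  have Uc: "U \<in> carrier_mat a a" and Vc: "V \<in> carrier_mat b b" using U V uniD by auto
  have "kron (cj a U x) (cj b V y) = kron (U * real_diag a x) (V * real_diag b y) * kron (adj U) (adj V)"
    unfolding cj_def by (rule kron_mult[symmetric]) (use Uc Vc in auto)
  also have "kron (U * real_diag a x) (V * real_diag b y) = kron U V * kron (real_diag a x) (real_diag b y)"
    by (rule kron_mult[symmetric]) (use Uc Vc in auto)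
  finally show ?thesis unfolding cj_def kron_diag kron_adj .
qed

fun PP :: "nat \<Rightarrow> (nat \<Rightarrow> real) \<Rightarrow> nat \<Rightarrow> nat \<Rightarrow> real" where
  "PP d p 0 = (\<lambda>_. 1)"
| "PP d p (Suc k) = (\<lambda>i. PP d p k (i div d) * p (i mod d))"

lemma tensor_cj: assumes U: "uni d U" and rho: "\<rho> = cj d U p"
  shows "uni (d ^ k) (tensor_pow U k) \<and> tensor_pow \<rho> k = cj (d ^ k) (tensor_pow U k) (PP d p k)"
proof (induction k)
  case 0
  have "adj (1\<^sub>m 1) = (1\<^sub>m 1 :: complex mat)" by (rule eq_matI) auto
  hence u1: "uni 1 (1\<^sub>m 1)" by (simp add: uni_def)
  have "(1 :: complex) \<cdot>\<^sub>m 1\<^sub>m 1 = 1\<^sub>m 1" by (rule eq_matI) auto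
  hence "cj 1 (1\<^sub>m 1) (\<lambda>_. 1) = 1\<^sub>m 1" using cj_const[OF u1, of 1] by simp
  then show ?case using u1 by simp
next
  case (Suc k)
  have u: "uni (d ^ k * d) (kron (tensor_pow U k) U)" using uni_kron[OF conjunct1[OF Suc] U] .
  have "tensor_pow \<rho> (Suc k) = kron (cj (d ^ k) (tensor_pow U k) (PP d p k)) (cj d U p)"
    using Suc rho by simp
  also have "\<dots> = cj (d ^ k * d) (kron (tensor_pow U k) U) (PP d p (Suc k))"
    by (simp add: cj_kron[OF conjunct1[OF Suc] U])
  finally show ?case using u by (simp add: mult.commute)
qed

definition wv :: "nat \<Rightarrow> complex mat \<Rightarrow> complex vec \<Rightarrow> nat \<Rightarrow> complex" where
  "wv n U v k = (\<Sum>j<n. cnj (U $$ (j,k)) * v $ j)"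

lemma cj_mv: assumes U: "uni n U" and v: "v \<in> carrier_vec n" and i: "i < n"
  shows "(cj n U a *\<^sub>v v) $ i = (\<Sum>k<n. U $$ (i,k) * complex_of_real (a k) * wv n U v k)"
proof -
  have "(cj n U a *\<^sub>v v) $ i = (\<Sum>j<n. (\<Sum>k<n. U $$ (i,k) * complex_of_real (a k) * cnj (U $$ (j,k))) * v $ j)"
    using mv_entry[OF cj_carrier[OF U] v i] U i by (simp add: cj_entry del: index_mult_mat_vec)
  also have "\<dots> = (\<Sum>k<n. U $$ (i,k) * complex_of_real (a k) * wv n U v k)"
    unfolding wv_def by (simp add: sum_distrib_left sum_distrib_right algebra_simps, rule sum.swap)
  finally show ?thesis .
qed

lemma cj_mv_back: assumes U: "uni n U" and v: "v \<in> carrier_vec n" and m: "m < n"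
  shows "(\<Sum>i<n. cnj (U $$ (i,m)) * (cj n U a *\<^sub>v v) $ i) = complex_of_real (a m) * wv n U v m"
proof -
  have "(\<Sum>i<n. cnj (U $$ (i,m)) * (cj n U a *\<^sub>v v) $ i) =
     (\<Sum>i<n. \<Sum>k<n. cnj (U $$ (i,m)) * U $$ (i,k) * (complex_of_real (a k) * wv n U v k))"
    using U v by (simp add: cj_mv sum_distrib_left algebra_simps del: index_mult_mat_vec)
  also have "\<dots> = (\<Sum>k<n. (\<Sum>i<n. cnj (U $$ (i,m)) * U $$ (i,k)) * (complex_of_real (a k) * wv n U v k))"
    by (subst sum.swap) (simp add: sum_distrib_right)
  also have "\<dots> = (\<Sum>k<n. (if m = k then complex_of_real (a k) * wv n U v k else 0))"
    by (intro sum.cong refl) (simp add: sum_unit_col[OF U m])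
  also have "\<dots> = complex_of_real (a m) * wv n U v m"
    using m by simp
  finally show ?thesis .
qed

lemma mtrace_minus: "A \<in> carrier_mat n n \<Longrightarrow> B \<in> carrier_mat n n \<Longrightarrow> mtrace (A - B) = mtrace A - mtrace B"
  by (auto simp: mtrace_def sum_subtractf)

lemma quad_col: assumes U: "uni n U" and m: "m < n"
  shows "quad (cj n U a) (col U m) = complex_of_real (a m)"
proof -
  have Uc: "U \<in> carrier_mat n n" using U uniD by auto
  have w: "k < n \<Longrightarrow> (\<Sum>j<n. cnj (U $$ (j,k)) * col U m $ j) = (if k = m then 1 else 0)" for k
  proof -
    assume k: "k < n"
    have "(\<Sum>j<n. cnj (U $$ (j,k)) * col U m $ j) = (\<Sum>j<n. cnj (U $$ (j,k)) * U $$ (j,m))"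
      by (intro sum.cong refl) (use Uc m in auto)
    thus ?thesis using sum_unit_col[OF U k m] by simp
  qed
  have cv: "col U m \<in> carrier_vec n" using Uc by auto
  have "quad (cj n U a) (col U m) = (\<Sum>k<n. complex_of_real (a k) *
     (cnj (\<Sum>j<n. cnj (U $$ (j,k)) * col U m $ j) * (\<Sum>j<n. cnj (U $$ (j,k)) * col U m $ j)))"
    by (rule quad_cj[OF U cv])
  also have "\<dots> = (\<Sum>k<n. if k = m then complex_of_real (a k) else 0)"
    by (intro sum.cong refl) (simp add: w)
  finally show ?thesis using m by simp
qed

lemma density_decomp:
  assumes "density_op d \<rho>"
  shows "\<exists>U p. uni d U \<and> \<rho> = cj d U p \<and> (\<forall>i<d. p i \<ge> 0) \<and> (\<Sum>i<d. p i) = 1"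
proof -
  have c: "\<rho> \<in> carrier_mat d d" and h: "adj \<rho> = \<rho>" and psd: "psd_mat \<rho>" and tr: "mtrace \<rho> = 1"
    using assms unfolding density_op_def psd_mat_def hermitian_mat_def by auto
  obtain U p where U: "uni d U" and r: "\<rho> = cj d U p" using herm_cj[OF c h] by auto
  have Uc: "U \<in> carrier_mat d d" using U uniD by auto
  have "\<forall>i<d. p i \<ge> 0"
  proof (intro allI impI)
    fix i assume i: "i < d"
    have "\<forall>v \<in> carrier_vec (dim_row \<rho>). 0 \<le> Re (quad \<rho> v)"
      using psd unfolding psd_mat_def quad_def by blast
    moreover have "col U i \<in> carrier_vec (dim_row \<rho>)" using Uc c by auto
    ultimately have "0 \<le> Re (quad \<rho> (col U i))" by blast
    thus "p i \<ge> 0" using quad_col[OF U i] r by simp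
  qed
  moreover have "(\<Sum>i<d. p i) = 1"
    using tr cj_trace[OF U, of p] r by (metis of_real_eq_1_iff of_real_sum)
  ultimately show ?thesis using U r by blast
qed

lemma density_cj: assumes U: "uni d U" and t: "\<forall>i<d. t i \<ge> 0" "(\<Sum>i<d. t i) = 1"
  shows "density_op d (cj d U t)"
proof -
  have Uc: "U \<in> carrier_mat d d" using U uniD by auto
  have "0 \<le> Re (quad (cj d U t) v)" if v: "v \<in> carrier_vec d" for v
  proof -
    have "Re (quad (cj d U t) v) = (\<Sum>k<d. t k * Re (cnj (wv d U v k) * wv d U v k))"
      using quad_cj[OF U v, of t] unfolding wv_def by (simp add: Re_sum)
    also have "\<dots> \<ge> 0" using t(1) by (intro sum_nonneg mult_nonneg_nonneg) auto
    finally show ?thesis .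
  qed
  hence "psd_mat (cj d U t)" unfolding psd_mat_def hermitian_mat_def quad_def
    using cj_adj[OF U] cj_carrier[OF U] Uc by auto
  moreover have "mtrace (cj d U t) = 1" using cj_trace[OF U, of t] t(2)
    by (metis of_real_1 of_real_sum)
  ultimately show ?thesis unfolding density_op_def using U by simp
qed

lemma vn_entropy_cj: assumes U: "uni d U"
  shows "vn_entropy (cj d U t) = - (\<Sum>i<d. t i * log 2 (t i))"
  unfolding vn_entropy_def log2_mat_def using U
  by (simp add: mat_fun_cj cj_mult cj_trace Re_sum)

lemma rel_entropy_cj: assumes U: "uni d U" and supp: "\<forall>i<d. t i \<noteq> 0 \<longrightarrow> p i \<noteq> 0"
  shows "rel_entropy (cj d U t) (cj d U p) = ereal (\<Sum>i<d. t i * (log 2 (t i) - log 2 (p i)))"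
proof -
  have Uc: "U \<in> carrier_mat d d" using U uniD by auto
  have dr: "dim_row (cj d U p) = d" using Uc by simp
  have "cj d U t *\<^sub>v v = 0\<^sub>v d" if v: "v \<in> carrier_vec d" and z: "cj d U p *\<^sub>v v = 0\<^sub>v d" for v
  proof -
    have pw: "p m = 0 \<or> wv d U v m = 0" if m: "m < d" for m
    proof -
      have "complex_of_real (p m) * wv d U v m = (\<Sum>i<d. cnj (U $$ (i,m)) * (cj d U p *\<^sub>v v) $ i)"
        using cj_mv_back[OF U v m] by simp
      also have "\<dots> = 0" using z by simp
      finally show ?thesis by simp
    qed
    show ?thesis
    proof (rule eq_vecI)
      fix i assume "i < dim_vec (0\<^sub>v d :: complex vec)"
      hence i: "i < d" by simp
      have "(cj d U t *\<^sub>v v) $ i = (\<Sum>k<d. U $$ (i,k) * complex_of_real (t k) * wv d U v k)"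
        by (rule cj_mv[OF U v i])
      also have "\<dots> = 0" using pw supp by (intro sum.neutral) auto
      finally show "(cj d U t *\<^sub>v v) $ i = 0\<^sub>v d $ i" using i by simp
    qed (use Uc in simp)
  qed
  hence cond: "\<forall>v \<in> carrier_vec (dim_row (cj d U p)). cj d U p *\<^sub>v v = 0\<^sub>v (dim_row (cj d U p)) \<longrightarrow>
        cj d U t *\<^sub>v v = 0\<^sub>v (dim_row (cj d U p))" unfolding dr by blast
  show ?thesis unfolding rel_entropy_def using cond U
    by (simp add: log2_mat_def mat_fun_cj cj_minus cj_mult cj_trace Re_sum)
qed

lemma cj_commute: assumes U: "uni d U" shows "cj d U a * cj d U b = cj d U b * cj d U a"
  using U by (simp add: cj_mult mult.commute)

lemma xlogx_lower: assumes "(s::real) \<ge> 0" shows "s * log 2 s \<ge> -2"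
proof (cases "s = 0")
  case False
  hence s: "s > 0" using assms by simp
  have "ln (1/s) \<le> 1/s - 1" using ln_le_minus_one[of "1/s"] s by simp
  hence "s * ln s \<ge> s - 1" using s by (simp add: ln_div field_simps)
  hence l1: "s * ln s \<ge> -1" using s by linarith
  have "ln (1/2::real) \<le> 1/2 - 1" using ln_le_minus_one[of "1/2::real"] by simp
  hence l2: "ln 2 \<ge> (1/2::real)" by (simp add: ln_div)
  have e: "s * log 2 s = (s * ln s) / ln 2" by (simp add: log_def)
  have "(s * ln s) / ln 2 \<ge> -1 / ln 2" using l1 l2 by (intro divide_right_mono) auto
  moreover have "-1 / ln 2 \<ge> (-2::real)" using l2 by (simp add: field_simps)
  ultimately show ?thesis using e by linarith
qed simp

lemma ifr: "(if P then 1 else 0) * (y::real) = (if P then y else 0)" by simp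

lemma rel_entropy_lower:
  assumes U: "uni d U" and p: "\<forall>i<d. 0 \<le> p i \<and> p i \<le> 1" and sig: "density_op d \<sigma>"
  shows "rel_entropy \<sigma> (cj d U p) \<ge> ereal (- 2 * real d)"
proof -
  obtain V s where V: "uni d V" and sv: "\<sigma> = cj d V s" and s: "\<forall>i<d. s i \<ge> 0" "(\<Sum>i<d. s i) = 1"
    using density_decomp[OF sig] by auto
  have Uc: "U \<in> carrier_mat d d" and Vc: "V \<in> carrier_mat d d" using U V uniD by auto
  have sc: "\<sigma> \<in> carrier_mat d d" and psd: "psd_mat \<sigma>" using sig unfolding density_op_def by auto
  have L1: "log2_mat \<sigma> = cj d V (log 2 \<circ> s)" unfolding sv log2_mat_def by (rule mat_fun_cj[OF V])
  have L2: "log2_mat (cj d U p) = cj d U (log 2 \<circ> p)" unfolding log2_mat_def by (rule mat_fun_cj[OF U])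
  have "\<sigma> * (log2_mat \<sigma> - log2_mat (cj d U p)) = \<sigma> * log2_mat \<sigma> - \<sigma> * log2_mat (cj d U p)"
    unfolding L1 L2 by (rule mult_minus_distrib_mat[OF sc cj_carrier[OF V] cj_carrier[OF U]])
  hence tr: "mtrace (\<sigma> * (log2_mat \<sigma> - log2_mat (cj d U p))) =
     mtrace (\<sigma> * log2_mat \<sigma>) - mtrace (\<sigma> * log2_mat (cj d U p))"
    using mtrace_minus[of "\<sigma> * log2_mat \<sigma>" d "\<sigma> * log2_mat (cj d U p)"] sc U V L1 L2 by simp
  have t1: "Re (mtrace (\<sigma> * log2_mat \<sigma>)) = (\<Sum>i<d. s i * log 2 (s i))"
    unfolding L1 unfolding sv using V by (simp add: cj_mult cj_trace Re_sum)
  have q: "\<forall>k<d. 0 \<le> Re (quad \<sigma> (col U k))"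
  proof (intro allI impI)
    fix k assume k: "k < d"
    have "\<forall>v \<in> carrier_vec (dim_row \<sigma>). 0 \<le> Re (quad \<sigma> v)"
      using psd unfolding psd_mat_def quad_def by blast
    moreover have "col U k \<in> carrier_vec (dim_row \<sigma>)" using Uc sc by auto
    ultimately show "0 \<le> Re (quad \<sigma> (col U k))" by blast
  qed
  have lp: "\<forall>k<d. log 2 (p k) \<le> 0"
  proof (intro allI impI)
    fix k assume k: "k < d"
    show "log 2 (p k) \<le> 0"
    proof (cases "p k = 0")
      case False thus ?thesis using p k by auto
    qed (simp add: log_def)
  qed
  have t2: "Re (mtrace (\<sigma> * log2_mat (cj d U p))) = (\<Sum>k<d. log 2 (p k) * Re (quad \<sigma> (col U k)))"
    unfolding L2 using trace_with_cj[OF U sc, of "log 2 \<circ> p"] by (simp add: Re_sum)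
  have "(\<Sum>k<d. log 2 (p k) * Re (quad \<sigma> (col U k))) \<le> 0"
    using q lp by (intro sum_nonpos) (simp add: mult_nonpos_nonneg)
  moreover have "(\<Sum>i<d. s i * log 2 (s i)) \<ge> (\<Sum>i<d. -2)"
    using s xlogx_lower by (intro sum_mono) auto
  ultimately have "Re (mtrace (\<sigma> * (log2_mat \<sigma> - log2_mat (cj d U p)))) \<ge> - 2 * real d"
    using tr t1 t2 by simp
  thus ?thesis unfolding rel_entropy_def by simp
qed

lemma PP_sum: "(\<Sum>x<d ^ k. PP d p k x) = (\<Sum>i<d. p i) ^ k"
proof (induction k)
  case 0 thus ?case by simp
next
  case (Suc k)
  have "(\<Sum>x<d ^ Suc k. PP d p (Suc k) x) = (\<Sum>x<d ^ k * d. PP d p k (x div d) * p (x mod d))"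
    by (simp add: mult.commute)
  also have "\<dots> = (\<Sum>a<d ^ k. \<Sum>b<d. PP d p k a * p b)"
    by (rule sum_divmod)
  also have "\<dots> = (\<Sum>a<d ^ k. PP d p k a) * (\<Sum>b<d. p b)" by (simp add: sum_product)
  finally show ?case using Suc by simp
qed

lemma PP_nonneg: "\<forall>i<d. p i \<ge> 0 \<Longrightarrow> d > 0 \<Longrightarrow> PP d p k x \<ge> 0"
  by (induction k arbitrary: x) auto

lemma tensor_dim: assumes U: "uni d U" and rho: "\<rho> = cj d U p"
  shows "dim_row (tensor_pow \<rho> k) = d ^ k"
  using tensor_cj[OF U rho, of k] uniD by auto

lemma trace_proj_ge: assumes U: "uni d U" and rho: "\<rho> = cj d U p"
  shows "Re (mtrace (proj_ge (tensor_pow \<rho> k) c * tensor_pow \<rho> k)) =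
    (\<Sum>x<d ^ k. if PP d p k x \<ge> c then PP d p k x else 0)"
proof -
  define N where "N = d ^ k"
  define W where "W = tensor_pow U k"
  have W: "uni N W" and T: "tensor_pow \<rho> k = cj N W (PP d p k)"
    using tensor_cj[OF U rho, of k] unfolding N_def W_def by auto
  have dr: "dim_row (tensor_pow \<rho> k) = N" using T W uniD by simp
  have "tensor_pow \<rho> k - complex_of_real c \<cdot>\<^sub>m 1\<^sub>m N = cj N W (\<lambda>x. PP d p k x - c)"
    unfolding T cj_const[OF W, symmetric] by (rule cj_minus[OF W])
  hence P: "proj_ge (tensor_pow \<rho> k) c = cj N W (\<lambda>x. if PP d p k x \<ge> c then 1 else 0)"
    unfolding proj_ge_def proj_nonneg_def dr using mat_fun_cj[OF W] by (simp add: o_def)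
  show ?thesis unfolding P unfolding T N_def[symmetric] using W
    by (simp add: cj_mult cj_trace Re_sum ifr)
qed

lemma trace_proj_le: assumes U: "uni d U" and rho: "\<rho> = cj d U p"
  shows "Re (mtrace (proj_le (tensor_pow \<rho> k) c * tensor_pow \<rho> k)) =
    (\<Sum>x<d ^ k. if PP d p k x \<le> c then PP d p k x else 0)"
proof -
  define N where "N = d ^ k"
  define W where "W = tensor_pow U k"
  have W: "uni N W" and T: "tensor_pow \<rho> k = cj N W (PP d p k)"
    using tensor_cj[OF U rho, of k] unfolding N_def W_def by auto
  have dr: "dim_row (tensor_pow \<rho> k) = N" using T W uniD by simp
  have "tensor_pow \<rho> k - complex_of_real c \<cdot>\<^sub>m 1\<^sub>m N = cj N W (\<lambda>x. PP d p k x - c)"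
    unfolding T cj_const[OF W, symmetric] by (rule cj_minus[OF W])
  hence P: "proj_le (tensor_pow \<rho> k) c = cj N W (\<lambda>x. if PP d p k x \<le> c then 1 else 0)"
    unfolding proj_le_def proj_nonpos_def dr using mat_fun_cj[OF W] by (simp add: o_def)
  show ?thesis unfolding P unfolding T N_def[symmetric] using W
    by (simp add: cj_mult cj_trace Re_sum ifr)
qed

fun cnt :: "nat \<Rightarrow> nat \<Rightarrow> nat \<Rightarrow> nat \<Rightarrow> nat" where
  "cnt d 0 x i = 0"
| "cnt d (Suc k) x i = cnt d k (x div d) i + (if x mod d = i then 1 else 0)"

lemma PP_prod: "d > 0 \<Longrightarrow> PP d p k x = (\<Prod>i<d. p i ^ cnt d k x i)"
proof (induction k arbitrary: x)
  case 0 thus ?case by simp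
next
  case (Suc k)
  have "(\<Prod>i<d. p i ^ cnt d (Suc k) x i) = (\<Prod>i<d. p i ^ cnt d k (x div d) i * p i ^ (if x mod d = i then 1 else 0))"
    by (simp add: power_add)
  also have "\<dots> = (\<Prod>i<d. p i ^ cnt d k (x div d) i) * (\<Prod>i<d. p i ^ (if x mod d = i then 1 else 0))"
    by (rule prod.distrib)
  also have "(\<Prod>i<d. p i ^ (if x mod d = i then 1 else 0)) = (\<Prod>i<d. if x mod d = i then p i else 1)"
    by (intro prod.cong refl) auto
  also have "\<dots> = p (x mod d)" using Suc.prems by simp
  finally show ?case using Suc by simp
qed

lemma cnt_sum: "d > 0 \<Longrightarrow> (\<Sum>i<d. cnt d k x i) = k"
proof (induction k arbitrary: x)
  case 0 thus ?case by simp
next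
  case (Suc k)
  have "(\<Sum>i<d. cnt d (Suc k) x i) = (\<Sum>i<d. cnt d k (x div d) i) + (\<Sum>i<d. if x mod d = i then 1 else 0)"
    by (simp add: sum.distrib)
  also have "(\<Sum>i<d. (if x mod d = i then 1 else 0 :: nat)) = 1" using Suc.prems by simp
  finally show ?case using Suc by simp
qed

lemma cnt_le: "cnt d k x i \<le> k"
  by (induction k arbitrary: x) (auto intro: le_SucI)

definition ty :: "nat \<Rightarrow> nat \<Rightarrow> nat \<Rightarrow> nat \<Rightarrow> nat" where
  "ty d k x = restrict (cnt d k x) {..<d}"

lemma ty_PiE: "ty d k x \<in> PiE {..<d} (\<lambda>_. {..k})"
  unfolding ty_def using cnt_le by auto

lemma ty_eq: "ty d k x = ty d k y \<Longrightarrow> i < d \<Longrightarrow> cnt d k x i = cnt d k y i"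
  unfolding ty_def by (metis lessThan_iff restrict_apply')

definition tfr :: "nat \<Rightarrow> nat \<Rightarrow> nat \<Rightarrow> nat \<Rightarrow> real" where
  "tfr d n x i = real (cnt d n x i) / real n"

definition Dv :: "nat \<Rightarrow> nat \<Rightarrow> (nat \<Rightarrow> real) \<Rightarrow> nat \<Rightarrow> real" where
  "Dv d n p x = (\<Sum>i<d. tfr d n x i * (log 2 (tfr d n x i) - log 2 (p i)))"

lemma tfr_sum: "d > 0 \<Longrightarrow> n > 0 \<Longrightarrow> (\<Sum>i<d. tfr d n x i) = 1"
  unfolding tfr_def using cnt_sum[of d n x] by (simp add: sum_divide_distrib[symmetric] flip: of_nat_sum)

lemma key_identity:
  assumes d: "d > 0" and n: "n > 0" and p: "\<forall>i<d. p i \<ge> 0" and pos: "PP d p n x > 0"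
  shows "PP d p n x = (\<Prod>i<d. tfr d n x i ^ cnt d n x i) * 2 powr (- real n * Dv d n p x)"
proof -
  define c where "c i = cnt d n x i" for i
  define t where "t i = tfr d n x i" for i
  have prodpos: "(\<Prod>i<d. p i ^ c i) > 0" using pos PP_prod[OF d] unfolding c_def by simp
  have pi: "c i > 0 \<Longrightarrow> p i > 0" if i: "i < d" for i
  proof -
    assume ci: "c i > 0"
    have "p i ^ c i \<noteq> 0"
    proof
      assume "p i ^ c i = 0"
      hence "(\<Prod>i<d. p i ^ c i) = 0" using i by (intro prod_zero) auto
      thus False using prodpos by linarith
    qed
    hence "p i \<noteq> 0" using ci by simp
    thus ?thesis using p i by (simp add: less_le)
  qed
  have each: "p i ^ c i = t i ^ c i * 2 powr (real (c i) * (log 2 (p i) - log 2 (t i)))" if i: "i < d" for i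
  proof (cases "c i = 0")
    case True thus ?thesis by simp
  next
    case False
    hence pp: "p i > 0" using pi i by simp
    have tp: "t i > 0" using False n unfolding t_def tfr_def c_def by simp
    have "2 powr (real (c i) * (log 2 (p i) - log 2 (t i))) = (2 powr (log 2 (p i) - log 2 (t i))) ^ c i"
      by (subst mult.commute, subst powr_powr[symmetric], rule powr_realpow) simp
    also have "2 powr (log 2 (p i) - log 2 (t i)) = p i / t i"
      using pp tp by (simp add: powr_diff)
    finally show ?thesis using tp by (simp add: power_divide)
  qed
  have "PP d p n x = (\<Prod>i<d. t i ^ c i * 2 powr (real (c i) * (log 2 (p i) - log 2 (t i))))"
    unfolding PP_prod[OF d] c_def[symmetric] by (intro prod.cong refl) (simp add: each)
  also have "\<dots> = (\<Prod>i<d. t i ^ c i) * (\<Prod>i<d. 2 powr (real (c i) * (log 2 (p i) - log 2 (t i))))"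
    by (rule prod.distrib)
  also have "(\<Prod>i<d. 2 powr (real (c i) * (log 2 (p i) - log 2 (t i)))) =
      2 powr (\<Sum>i<d. real (c i) * (log 2 (p i) - log 2 (t i)))"
    by (rule powr_sum[symmetric]) simp
  also have "(\<Sum>i<d. real (c i) * (log 2 (p i) - log 2 (t i))) = - real n * Dv d n p x"
    unfolding Dv_def t_def[symmetric] sum_distrib_left
  proof (intro sum.cong refl)
    fix i
    have e: "real (c i) = real n * t i" using n by (simp add: t_def tfr_def c_def)
    show "real (c i) * (log 2 (p i) - log 2 (t i)) = - real n * (t i * (log 2 (t i) - log 2 (p i)))"
      unfolding e by (simp add: algebra_simps)
  qed
  finally show ?thesis unfolding t_def c_def .
qed

lemma class_bound:
  assumes d: "d > 0" and n: "n > 0" and K: "K \<subseteq> {..<d ^ n}" and x0: "\<forall>x\<in>K. ty d n x = ty d n x0"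
  shows "real (card K) * (\<Prod>i<d. tfr d n x0 i ^ cnt d n x0 i) \<le> 1"
proof -
  let ?t = "tfr d n x0"
  have tnn: "\<forall>i<d. ?t i \<ge> 0" by (simp add: tfr_def)
  have fK: "finite K" using K finite_subset by blast
  have cx: "cnt d n x i = cnt d n x0 i" if "x \<in> K" "i < d" for x i
    using x0 ty_eq that by blast
  have "(\<Sum>x\<in>K. PP d ?t n x) = (\<Sum>x\<in>K. \<Prod>i<d. ?t i ^ cnt d n x0 i)"
    unfolding PP_prod[OF d] by (intro sum.cong refl prod.cong) (auto simp: cx)
  hence "real (card K) * (\<Prod>i<d. ?t i ^ cnt d n x0 i) = (\<Sum>x\<in>K. PP d ?t n x)" by simp
  also have "\<dots> \<le> (\<Sum>x<d ^ n. PP d ?t n x)"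
    by (rule sum_mono2[OF finite_lessThan K(1)]) (rule PP_nonneg[OF tnn d])
  also have "\<dots> = 1" using PP_sum[of d ?t n] tfr_sum[OF d n] by simp
  finally show ?thesis .
qed

lemma type_bound:
  assumes d: "d > 0" and n: "n > 0" and p: "\<forall>i<d. p i \<ge> 0" and S: "S \<subseteq> {..<d ^ n}"
    and H: "\<forall>x\<in>S. PP d p n x > 0 \<longrightarrow> r \<le> Dv d n p x"
  shows "(\<Sum>x\<in>S. PP d p n x) \<le> real ((n + 1) ^ d) * 2 powr (- real n * r)"
proof -
  have fS: "finite S" using S finite_subset by blast
  define C where "C = ty d n ` S"
  have fC: "finite C" using fS by (simp add: C_def)
  have each: "(\<Sum>x\<in>{x \<in> S. ty d n x = c}. PP d p n x) \<le> 2 powr (- real n * r)" if c: "c \<in> C" for c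
  proof -
    obtain x0 where x0: "x0 \<in> S" "ty d n x0 = c" using c unfolding C_def by auto
    define K where "K = {x \<in> S. ty d n x = c}"
    have K: "K \<subseteq> {..<d ^ n}" "\<forall>x\<in>K. ty d n x = ty d n x0" using S x0 by (auto simp: K_def)
    have cx: "cnt d n x i = cnt d n x0 i" if "x \<in> K" "i < d" for x i
      using K(2) ty_eq that by blast
    have const: "\<forall>x\<in>K. PP d p n x = PP d p n x0"
      unfolding PP_prod[OF d] by (auto simp: cx intro!: prod.cong)
    have sK: "(\<Sum>x\<in>K. PP d p n x) = real (card K) * PP d p n x0" using const by simp
    show ?thesis
    proof (cases "PP d p n x0 > 0")
      case False
      hence "PP d p n x0 = 0" using PP_nonneg[OF p d, of n x0] by simp
      thus ?thesis unfolding K_def[symmetric] sK by simp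
    next
      case True
      have r: "r \<le> Dv d n p x0" using H x0 True by auto
      have "real (card K) * PP d p n x0 = real (card K) * (\<Prod>i<d. tfr d n x0 i ^ cnt d n x0 i) *
          2 powr (- real n * Dv d n p x0)"
        using key_identity[OF d n p True] by simp
      also have "\<dots> \<le> 1 * 2 powr (- real n * Dv d n p x0)"
        by (rule mult_right_mono[OF class_bound[OF d n K]]) simp
      also have "\<dots> \<le> 2 powr (- real n * r)" using r n by simp
      finally show ?thesis unfolding K_def[symmetric] sK .
    qed
  qed
  have "(\<Sum>x\<in>S. PP d p n x) = (\<Sum>c\<in>C. \<Sum>x\<in>{x \<in> S. ty d n x = c}. PP d p n x)"
    by (rule sum.group[symmetric, OF fS fC]) (simp add: C_def)
  also have "\<dots> \<le> (\<Sum>c\<in>C. 2 powr (- real n * r))" by (rule sum_mono) (rule each)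
  also have "\<dots> = real (card C) * 2 powr (- real n * r)" by simp
  also have "\<dots> \<le> real ((n + 1) ^ d) * 2 powr (- real n * r)"
  proof (rule mult_right_mono)
    have "C \<subseteq> PiE {..<d} (\<lambda>_. {..n})" unfolding C_def using ty_PiE by auto
    hence "card C \<le> card (PiE {..<d} (\<lambda>_. {..n}))" by (intro card_mono finite_PiE) auto
    also have "\<dots> = (n + 1) ^ d" by (simp add: card_PiE)
    finally have "card C \<le> (n + 1) ^ d" by simp
    thus "real (card C) \<le> real ((n + 1) ^ d)" by (simp only: of_nat_le_iff)
  qed simp
  finally show ?thesis .
qed

lemma PP_powr:
  assumes d: "d > 0" and n: "n > 0" and p: "\<forall>i<d. p i \<ge> 0" and pos: "PP d p n x > 0"
  shows "PP d p n x = 2 powr (real n * (\<Sum>i<d. tfr d n x i * log 2 (p i)))"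
proof -
  define c where "c i = cnt d n x i" for i
  have prodpos: "(\<Prod>i<d. p i ^ c i) > 0" using pos PP_prod[OF d] unfolding c_def by simp
  have pi: "c i > 0 \<Longrightarrow> p i > 0" if i: "i < d" for i
  proof -
    assume ci: "c i > 0"
    have "p i ^ c i \<noteq> 0"
    proof
      assume "p i ^ c i = 0"
      hence "(\<Prod>i<d. p i ^ c i) = 0" using i by (intro prod_zero) auto
      thus False using prodpos by linarith
    qed
    hence "p i \<noteq> 0" using ci by simp
    thus ?thesis using p i by (simp add: less_le)
  qed
  have each: "p i ^ c i = 2 powr (real (c i) * log 2 (p i))" if i: "i < d" for i
  proof (cases "c i = 0")
    case True thus ?thesis by simp
  next
    case False
    hence pp: "p i > 0" using pi i by simp
    have "2 powr (real (c i) * log 2 (p i)) = (2 powr (log 2 (p i))) ^ c i"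
      by (subst mult.commute, subst powr_powr[symmetric], rule powr_realpow) simp
    thus ?thesis using pp by simp
  qed
  have "PP d p n x = (\<Prod>i<d. 2 powr (real (c i) * log 2 (p i)))"
    unfolding PP_prod[OF d] c_def[symmetric] by (intro prod.cong refl) (simp add: each)
  also have "\<dots> = 2 powr (\<Sum>i<d. real (c i) * log 2 (p i))"
    by (rule powr_sum[symmetric]) simp
  also have "(\<Sum>i<d. real (c i) * log 2 (p i)) = real n * (\<Sum>i<d. tfr d n x i * log 2 (p i))"
    unfolding sum_distrib_left using n by (intro sum.cong refl) (simp add: tfr_def c_def)
  finally show ?thesis .
qed

lemma final_bound:
  assumes d: "d > 0" and n: "n > 0" and p: "\<forall>i<d. p i \<ge> 0" and S: "S \<subseteq> {..<d ^ n}"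
    and Db: "D \<ge> ereal b" and H: "\<forall>x\<in>S. PP d p n x > 0 \<longrightarrow> D \<le> ereal (Dv d n p x)"
  shows "(\<Sum>x\<in>S. PP d p n x) \<le> eps_of d n D"
proof (cases D)
  case (real r)
  have H': "\<forall>x\<in>S. PP d p n x > 0 \<longrightarrow> r \<le> Dv d n p x"
  proof (intro ballI impI)
    fix x assume "x \<in> S" "PP d p n x > 0"
    hence "D \<le> ereal (Dv d n p x)" using H by blast
    thus "r \<le> Dv d n p x" using real by (metis ereal_less_eq(3))
  qed
  have "(\<Sum>x\<in>S. PP d p n x) \<le> real ((n + 1) ^ d) * 2 powr (- real n * r)"
    by (rule type_bound[OF d n p S H'])
  thus ?thesis unfolding eps_of_def real by (simp add: add.commute)
next
  case PInf
  have "\<forall>x\<in>S. PP d p n x = 0"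
  proof
    fix x assume x: "x \<in> S"
    have "\<not> PP d p n x > 0"
    proof
      assume "PP d p n x > 0"
      hence "D \<le> ereal (Dv d n p x)" using H x by blast
      thus False using PInf by simp
    qed
    thus "PP d p n x = 0" using PP_nonneg[OF p d, of n x] by simp
  qed
  hence "(\<Sum>x\<in>S. PP d p n x) = 0" by simp
  moreover have "ereal (real n) * D = \<infinity>" using PInf n by simp
  ultimately show ?thesis unfolding eps_of_def by simp
next
  case MInf
  thus ?thesis using Db by simp
qed

lemma PP_supp:
  assumes d: "d > 0" and p: "\<forall>i<d. p i \<ge> 0" and pos: "PP d p n x > 0" and i: "i < d"
    and ci: "cnt d n x i > 0"
  shows "p i > 0"
proof -
  have prodpos: "(\<Prod>i<d. p i ^ cnt d n x i) > 0" using pos PP_prod[OF d] by simp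
  have "p i ^ cnt d n x i \<noteq> 0"
  proof
    assume "p i ^ cnt d n x i = 0"
    hence "(\<Prod>i<d. p i ^ cnt d n x i) = 0" using i by (intro prod_zero) auto
    thus False using prodpos by linarith
  qed
  hence "p i \<noteq> 0" using ci by simp
  thus ?thesis using p i by (simp add: less_le)
qed

lemma sigma_facts:
  assumes U: "uni d U" and d: "d > 0" and n: "n > 0" and p: "\<forall>i<d. p i \<ge> 0"
    and pos: "PP d p n x > 0"
  shows "density_op d (cj d U (tfr d n x))"
    "cj d U p * cj d U (tfr d n x) = cj d U (tfr d n x) * cj d U p"
    "rel_entropy (cj d U (tfr d n x)) (cj d U p) = ereal (Dv d n p x)"
    "ereal (vn_entropy (cj d U (tfr d n x))) + rel_entropy (cj d U (tfr d n x)) (cj d U p) =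
       ereal (- (\<Sum>i<d. tfr d n x i * log 2 (p i)))"
proof -
  let ?t = "tfr d n x"
  show "density_op d (cj d U ?t)"
    by (rule density_cj[OF U]) (use tfr_sum[OF d n, of x] in \<open>auto simp: tfr_def\<close>)
  show "cj d U p * cj d U ?t = cj d U ?t * cj d U p" by (rule cj_commute[OF U])
  have supp: "\<forall>i<d. ?t i \<noteq> 0 \<longrightarrow> p i \<noteq> 0"
  proof (intro allI impI)
    fix i assume i: "i < d" and t: "?t i \<noteq> 0"
    hence "cnt d n x i > 0" by (auto simp: tfr_def)
    thus "p i \<noteq> 0" using PP_supp[OF d p pos i] by simp
  qed
  show r: "rel_entropy (cj d U ?t) (cj d U p) = ereal (Dv d n p x)"
    unfolding rel_entropy_cj[OF U supp] Dv_def ..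
  show "ereal (vn_entropy (cj d U ?t)) + rel_entropy (cj d U ?t) (cj d U p) =
       ereal (- (\<Sum>i<d. ?t i * log 2 (p i)))"
    unfolding r vn_entropy_cj[OF U] Dv_def
    by (simp add: sum_subtractf[symmetric] algebra_simps flip: sum.distrib sum_negf)
qed

theorem proposition2:
  fixes d n :: nat and \<rho> :: "complex mat" and \<gamma> :: real
  assumes "density_op d \<rho>" and "\<gamma> > 0" and "n > 0"
  shows "sup_spec_entropy (eps_of d n (D_bar \<rho> \<gamma>)) (tensor_pow \<rho> n)
           \<le> ereal (real n * (vn_entropy \<rho> + \<gamma>)) \<and>
         inf_spec_entropy (eps_of d n (D_under \<rho> \<gamma>)) (tensor_pow \<rho> n)
           \<ge> ereal (real n * (vn_entropy \<rho> - \<gamma>))"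
proof -
  note dens = assms(1) and n = assms(3)
  obtain U p where U: "uni d U" and rho: "\<rho> = cj d U p" and p: "\<forall>i<d. p i \<ge> 0"
    and ps: "(\<Sum>i<d. p i) = 1"
    using density_decomp[OF dens] by auto
  have d: "d > 0" using ps by (cases d) auto
  have Uc: "U \<in> carrier_mat d d" using U uniD by auto
  have dr: "dim_row \<rho> = d" using rho Uc by simp
  have p1: "\<forall>i<d. 0 \<le> p i \<and> p i \<le> 1"
  proof (intro allI impI conjI)
    fix i assume i: "i < d"
    show "0 \<le> p i" using p i by simp
    have "p i \<le> (\<Sum>i<d. p i)" by (rule member_le_sum) (use p i in auto)
    thus "p i \<le> 1" using ps by simp
  qed
  have lowb: "rel_entropy \<sigma> \<rho> \<ge> ereal (- (2 * real d))" if "density_op d \<sigma>" for \<sigma>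
    using rel_entropy_lower[OF U p1 that] unfolding rho by simp
  define N where "N = d ^ n"
  have sumPP: "(\<Sum>x<N. PP d p n x) = 1" unfolding N_def PP_sum ps by simp
  have ppnn: "PP d p n x \<ge> 0" for x by (rule PP_nonneg[OF p d])
  have PPpow: "PP d p n x = 2 powr (real n * (\<Sum>i<d. tfr d n x i * log 2 (p i)))"
    if "PP d p n x > 0" for x by (rule PP_powr[OF d n p that])
  have trge: "Re (mtrace (proj_ge (tensor_pow \<rho> n) c * tensor_pow \<rho> n)) =
    (\<Sum>x<N. if PP d p n x \<ge> c then PP d p n x else 0)" for c
    unfolding N_def by (rule trace_proj_ge[OF U rho])
  have trle: "Re (mtrace (proj_le (tensor_pow \<rho> n) c * tensor_pow \<rho> n)) =
    (\<Sum>x<N. if PP d p n x \<le> c then PP d p n x else 0)" for c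
    unfolding N_def by (rule trace_proj_le[OF U rho])
  have split: "(\<Sum>x<N. if Q x then PP d p n x else 0) = 1 - (\<Sum>x\<in>{x\<in>{..<N}. \<not> Q x}. PP d p n x)" for Q
  proof -
    have "(\<Sum>x<N. PP d p n x) = (\<Sum>x<N. if Q x then PP d p n x else 0) + (\<Sum>x<N. if \<not> Q x then PP d p n x else 0)"
      by (subst sum.distrib[symmetric]) (intro sum.cong refl, simp)
    moreover have "(\<Sum>x<N. if \<not> Q x then PP d p n x else 0) = (\<Sum>x\<in>{x\<in>{..<N}. \<not> Q x}. PP d p n x)"
      by (rule sum.inter_filter[symmetric]) simp
    ultimately show ?thesis using sumPP by simp
  qed
  define l0 where "l0 = real n * (vn_entropy \<rho> + \<gamma>)"
  define B0 where "B0 = {x\<in>{..<N}. \<not> PP d p n x \<ge> 2 powr (- l0)}"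
  have Dlow1: "D_bar \<rho> \<gamma> \<ge> ereal (- (2 * real d))"
    unfolding D_bar_def dr by (rule Inf_greatest) (auto intro: lowb)
  have H1: "\<forall>x\<in>B0. PP d p n x > 0 \<longrightarrow> D_bar \<rho> \<gamma> \<le> ereal (Dv d n p x)"
  proof (intro ballI impI)
    fix x assume x: "x \<in> B0" and pos: "PP d p n x > 0"
    note sf = sigma_facts[OF U d n p pos]
    define L where "L = - (\<Sum>i<d. tfr d n x i * log 2 (p i))"
    have "2 powr (real n * (- L)) < 2 powr (- l0)" using x PPpow[OF pos] unfolding B0_def L_def by simp
    hence "real n * (- L) < - l0" by simp
    hence "L > vn_entropy \<rho> + \<gamma>" unfolding l0_def using n by (simp add: mult_less_cancel_left)
    hence "ereal (vn_entropy (cj d U (tfr d n x))) + rel_entropy (cj d U (tfr d n x)) \<rho> >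
        ereal (vn_entropy \<rho> + \<gamma>)" using sf(4) unfolding rho L_def by simp
    hence ineq: "ereal (vn_entropy (cj d U (tfr d n x))) + rel_entropy (cj d U (tfr d n x)) \<rho> >
        ereal (vn_entropy \<rho> + \<gamma>)" .
    have dens': "density_op (dim_row \<rho>) (cj d U (tfr d n x))" unfolding dr by (rule sf(1))
    have comm': "\<rho> * cj d U (tfr d n x) = cj d U (tfr d n x) * \<rho>" unfolding rho by (rule sf(2))
    have "rel_entropy (cj d U (tfr d n x)) \<rho> \<in> {rel_entropy \<sigma> \<rho> | \<sigma>. density_op (dim_row \<rho>) \<sigma> \<and>
        \<rho> * \<sigma> = \<sigma> * \<rho> \<and> ereal (vn_entropy \<sigma>) + rel_entropy \<sigma> \<rho> > ereal (vn_entropy \<rho> + \<gamma>)}"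
      by (rule CollectI, rule exI[of _ "cj d U (tfr d n x)"], intro conjI refl dens' comm' ineq)
    hence "D_bar \<rho> \<gamma> \<le> rel_entropy (cj d U (tfr d n x)) \<rho>" unfolding D_bar_def by (rule Inf_lower)
    thus "D_bar \<rho> \<gamma> \<le> ereal (Dv d n p x)" using sf(3) unfolding rho by simp
  qed
  have B0s: "B0 \<subseteq> {..<d ^ n}" unfolding B0_def N_def by auto
  have e1: "(\<Sum>x\<in>B0. PP d p n x) \<le> eps_of d n (D_bar \<rho> \<gamma>)"
    by (rule final_bound[OF d n p B0s Dlow1 H1])
  have "Re (mtrace (proj_ge (tensor_pow \<rho> n) (2 powr (- l0)) * tensor_pow \<rho> n)) \<ge> 1 - eps_of d n (D_bar \<rho> \<gamma>)"
    unfolding trge split B0_def[symmetric] using e1 by simp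
  hence "l0 \<in> {l. Re (mtrace (proj_ge (tensor_pow \<rho> n) (2 powr (-l)) * tensor_pow \<rho> n)) \<ge> 1 - eps_of d n (D_bar \<rho> \<gamma>)}"
    by simp
  hence part1: "sup_spec_entropy (eps_of d n (D_bar \<rho> \<gamma>)) (tensor_pow \<rho> n) \<le> ereal l0"
    unfolding sup_spec_entropy_def by (intro Inf_lower imageI)
  define l1 where "l1 = real n * (vn_entropy \<rho> - \<gamma>)"
  define B1 where "B1 = {x\<in>{..<N}. \<not> PP d p n x \<le> 2 powr (- l1)}"
  have Dlow2: "D_under \<rho> \<gamma> \<ge> ereal (- (2 * real d))"
    unfolding D_under_def dr by (rule Inf_greatest) (auto intro: lowb)
  have H2: "\<forall>x\<in>B1. PP d p n x > 0 \<longrightarrow> D_under \<rho> \<gamma> \<le> ereal (Dv d n p x)"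
  proof (intro ballI impI)
    fix x assume x: "x \<in> B1" and pos: "PP d p n x > 0"
    note sf = sigma_facts[OF U d n p pos]
    define L where "L = - (\<Sum>i<d. tfr d n x i * log 2 (p i))"
    have "2 powr (real n * (- L)) > 2 powr (- l1)" using x PPpow[OF pos] unfolding B1_def L_def by simp
    hence "real n * (- L) > - l1" by simp
    hence "L < vn_entropy \<rho> - \<gamma>" unfolding l1_def using n by (simp add: mult_less_cancel_left)
    hence "ereal (vn_entropy (cj d U (tfr d n x))) + rel_entropy (cj d U (tfr d n x)) \<rho> <
        ereal (vn_entropy \<rho> - \<gamma>)" using sf(4) unfolding rho L_def by simp
    hence ineq: "ereal (vn_entropy (cj d U (tfr d n x))) + rel_entropy (cj d U (tfr d n x)) \<rho> <
        ereal (vn_entropy \<rho> - \<gamma>)" .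
    have dens': "density_op (dim_row \<rho>) (cj d U (tfr d n x))" unfolding dr by (rule sf(1))
    have comm': "\<rho> * cj d U (tfr d n x) = cj d U (tfr d n x) * \<rho>" unfolding rho by (rule sf(2))
    have "rel_entropy (cj d U (tfr d n x)) \<rho> \<in> {rel_entropy \<sigma> \<rho> | \<sigma>. density_op (dim_row \<rho>) \<sigma> \<and>
        \<rho> * \<sigma> = \<sigma> * \<rho> \<and> ereal (vn_entropy \<sigma>) + rel_entropy \<sigma> \<rho> < ereal (vn_entropy \<rho> - \<gamma>)}"
      by (rule CollectI, rule exI[of _ "cj d U (tfr d n x)"], intro conjI refl dens' comm' ineq)
    hence "D_under \<rho> \<gamma> \<le> rel_entropy (cj d U (tfr d n x)) \<rho>" unfolding D_under_def by (rule Inf_lower)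
    thus "D_under \<rho> \<gamma> \<le> ereal (Dv d n p x)" using sf(3) unfolding rho by simp
  qed
  have B1s: "B1 \<subseteq> {..<d ^ n}" unfolding B1_def N_def by auto
  have e2: "(\<Sum>x\<in>B1. PP d p n x) \<le> eps_of d n (D_under \<rho> \<gamma>)"
    by (rule final_bound[OF d n p B1s Dlow2 H2])
  have "Re (mtrace (proj_le (tensor_pow \<rho> n) (2 powr (- l1)) * tensor_pow \<rho> n)) \<ge> 1 - eps_of d n (D_under \<rho> \<gamma>)"
    unfolding trle split B1_def[symmetric] using e2 by simp
  hence "l1 \<in> {l. Re (mtrace (proj_le (tensor_pow \<rho> n) (2 powr (-l)) * tensor_pow \<rho> n)) \<ge> 1 - eps_of d n (D_under \<rho> \<gamma>)}"
    by simp
  hence part2: "inf_spec_entropy (eps_of d n (D_under \<rho> \<gamma>)) (tensor_pow \<rho> n) \<ge> ereal l1"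
    unfolding inf_spec_entropy_def by (intro Sup_upper imageI)
  show ?thesis using part1 part2 unfolding l0_def l1_def by simp
qed

end
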